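(* Assume $p\ge2$, $q\ge2$, $p+q$ even, $m\in\mathbb N$ and $m+3\le\frac{p+q}2$. Let $\hat\Xi=\pi(\gamma_2(\Xi))$. Then for every $K$-homogeneous $f\in M^{+}(m)$ or $f\in M^{-}(m)$ with $K$-type $(\kappa_+,\kappa_-)$ one has $\hat\Xi f=\lambda f$ with $$\lambda=(\kappa_+-\kappa_-)(\kappa_++\kappa_--2)-\frac{p-q}{p+q}\,m(m+2).$$ In particular $\lambda=0$ if $m=0$.
   Context: Let $n=p+q$, $I_{p,q}=\mathrm{diag}(1_p,-1_q)$, $\mathfrak g=\{X\in\mathfrak{gl}_n(\mathbb C):{}^tXI_{p,q}+I_{p,q}X=0\}$, $\mathfrak o_n=\{X:{}^tX+X=0\}$, $[p]=\{1,\dots,p\}$, $p+[q]=\{p+1,\dots,n\}$, $\epsilon_i=1$ for $i\in[p]$ and $-1$ otherwise, $X_{i,j}=\epsilon_jE_{i,j}-\epsilon_iE_{j,i}$, $M_{i,j}=E_{i,j}-E_{j,i}$. $\Phi:\mathfrak g\to\mathfrak o_n$, $X\mapsto I_{p,q}^{1/2}XI_{p,q}^{-1/2}$ with $I_{p,q}^{1/2}=\mathrm{diag}(1,\dots,1,\sqrt{-1},\dots,\sqrt{-1})$, extended to tensors. $S^2$ is identified with symmetric 2-tensors and $\gamma_2:S^2(\mathfrak g)\to U(\mathfrak g)$ is the restriction of $a\otimes b\mapsto ab$. With $Q^\natural=\sum_{i,k}M_{i,k}\otimes M_{k,i}$ and $S^\natural_{ij}=\frac12\sum_k(M_{i,k}\otimes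 M_{k,j}+M_{k,j}\otimes M_{i,k})-\frac1n\delta_{ij}Q^\natural$, set $\Xi=\Phi^{-1}\big(\frac12(\sum_{i\in[p]}S^\natural_{ii}-\sum_{i\in p+[q]}S^\natural_{ii})\big)$. $K=\mathrm O(p)\times\mathrm O(q)$. On $V=\mathbb R^{p+q}$ with coordinates $(x_1,\dots,x_p,y_1,\dots,y_q)$ let $\mathcal H^k(\mathbb R^p)$, $\mathcal H^l(\mathbb R^q)$ be homogeneous harmonic polynomials of degrees $k,l$, $r_x^2=\sum x_i^2$, $r_y^2=\sum y_j^2$, and $\mathcal E=\bigoplus_{k,l\ge0}\mathcal H^k(\mathbb R^p)\otimes\mathcal H^l(\mathbb R^q)\otimes\mathbb C[[r_x^2,r_y^2]]$. The representation $\pi$ of $U(\mathfrak g)$ on $\mathcal E$ is given (with $i'=i-p$) by $\pi(X_{i,j})=x_i\partial_{x_j}-x_j\partial_{x_i}$ ($i,j\in[p]$), $-y_{i'}\partial_{y_{j'}}+y_{j'}\partial_{y_{i'}}$ ($i,j\in p+[q]$), $-\sqrt{-1}(x_iy_{j'}+\partial_{x_i}\partial_{y_{j'}})$ ($i\in[p],j\in p+[q]$), $\sqrt{-1}(x_jy_{i'}+\partial_{x_j}\partial_{y_{i'}})$ ($i\in p+[q],j\in[p]$). With $E_x=\sum x_i\partial_{x_i}$, $E_y=\sum y_j\partial_{y_j}$, $\Delta_x=\sum\partial_{x_i}^2$, $\Delta_y=\sum\partial_{y_j}^2$: $H=-E_x-\frac p2+E_y+\frac q2$, $X^+=-\frac12(\Delta_x+r_y^2)$,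 $X^-=\frac12(r_x^2+\Delta_y)$, $M^+(m)=\{f\in\mathcal E:Hf=mf,X^+f=0,(X^-)^{m+1}f=0\}$, $M^-(m)=\{f\in\mathcal E:Hf=-mf,X^-f=0,(X^+)^{m+1}f=0\}$. An element $h_1(x)h_2(y)\phi(r_x^2,r_y^2)$ with $h_1\in\mathcal H^k(\mathbb R^p)$, $h_2\in\mathcal H^l(\mathbb R^q)$ has $K$-type $(k+\frac p2,l+\frac q2)$; an element is $K$-homogeneous with $K$-type $(\kappa_+,\kappa_-)$ if it is a linear combination of such elements all of $K$-type $(\kappa_+,\kappa_-)$. *)

theory Defs
  imports Complex_Main "HOL-Library.Function_Algebras"
begin

text \<open>Variables are indexed by natural numbers: index i < p is x_(i+1), index p <= i < p+q
  is y_(i-p+1).\<close>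

type_synonym mon = "nat \<Rightarrow> nat"
type_synonym ser = "mon \<Rightarrow> complex"

definition smul :: "complex \<Rightarrow> ser \<Rightarrow> ser" where
  "smul c f = (\<lambda>\<alpha>. c * f \<alpha>)"

definition ser_mult :: "ser \<Rightarrow> ser \<Rightarrow> ser" where
  "ser_mult f g = (\<lambda>\<alpha>. \<Sum>\<beta>\<in>{\<beta>. \<forall>i. \<beta> i \<le> \<alpha> i}. f \<beta> * g (\<lambda>i. \<alpha> i - \<beta> i))"

definition ser_one :: ser where
  "ser_one = (\<lambda>\<alpha>. if \<alpha> = (\<lambda>_. 0) then 1 else 0)"

primrec ser_pow :: "ser \<Rightarrow> nat \<Rightarrow> ser" where
  "ser_pow f 0 = ser_one"
| "ser_pow f (Suc k) = ser_mult f (ser_pow f k)"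

definition unitmon :: "nat \<Rightarrow> mon" where
  "unitmon i = (\<lambda>j. if j = i then 1 else 0)"

definition ser_var :: "nat \<Rightarrow> ser" where
  "ser_var i = (\<lambda>\<alpha>. if \<alpha> = unitmon i then 1 else 0)"

definition mulvar :: "nat \<Rightarrow> ser \<Rightarrow> ser" where
  "mulvar i f = (\<lambda>\<alpha>. if 0 < \<alpha> i then f (\<alpha>(i := \<alpha> i - 1)) else 0)"

definition dvar :: "nat \<Rightarrow> ser \<Rightarrow> ser" where
  "dvar i f = (\<lambda>\<alpha>. of_nat (Suc (\<alpha> i)) * f (\<alpha>(i := Suc (\<alpha> i))))"

definition Lap_x :: "nat \<Rightarrow> ser \<Rightarrow> ser" where
  "Lap_x p f = (\<Sum>i<p. dvar i (dvar i f))"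

definition Lap_y :: "nat \<Rightarrow> nat \<Rightarrow> ser \<Rightarrow> ser" where
  "Lap_y p q f = (\<Sum>i\<in>{p..<p+q}. dvar i (dvar i f))"

definition Eul_x :: "nat \<Rightarrow> ser \<Rightarrow> ser" where
  "Eul_x p f = (\<Sum>i<p. mulvar i (dvar i f))"

definition Eul_y :: "nat \<Rightarrow> nat \<Rightarrow> ser \<Rightarrow> ser" where
  "Eul_y p q f = (\<Sum>i\<in>{p..<p+q}. mulvar i (dvar i f))"

definition rx2 :: "nat \<Rightarrow> ser" where
  "rx2 p = (\<Sum>i<p. mulvar i (ser_var i))"

definition ry2 :: "nat \<Rightarrow> nat \<Rightarrow> ser" where
  "ry2 p q = (\<Sum>i\<in>{p..<p+q}. mulvar i (ser_var i))"

definition harm_x :: "nat \<Rightarrow> nat \<Rightarrow> ser \<Rightarrow> bool" where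
  "harm_x p k h \<longleftrightarrow>
     (\<forall>\<alpha>. h \<alpha> \<noteq> 0 \<longrightarrow> (\<forall>j. p \<le> j \<longrightarrow> \<alpha> j = 0) \<and> (\<Sum>i<p. \<alpha> i) = k)
     \<and> Lap_x p h = 0"

definition harm_y :: "nat \<Rightarrow> nat \<Rightarrow> nat \<Rightarrow> ser \<Rightarrow> bool" where
  "harm_y p q l h \<longleftrightarrow>
     (\<forall>\<alpha>. h \<alpha> \<noteq> 0 \<longrightarrow> (\<forall>j. (j < p \<or> p + q \<le> j) \<longrightarrow> \<alpha> j = 0)
                       \<and> (\<Sum>i\<in>{p..<p+q}. \<alpha> i) = l)
     \<and> Lap_y p q h = 0"

text \<open>phi(u, v) for phi in C[[s,t]] (coefficient function c) and series u, v without
  constant term (here u = r_x^2, v = r_y^2, homogeneous of degree 2, in the first n variables)\<close>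
definition subst2 :: "nat \<Rightarrow> (nat \<times> nat \<Rightarrow> complex) \<Rightarrow> ser \<Rightarrow> ser \<Rightarrow> ser" where
  "subst2 n c u v = (\<lambda>\<alpha>. \<Sum>a\<le>(\<Sum>i<n. \<alpha> i). \<Sum>b\<le>(\<Sum>i<n. \<alpha> i).
        c (a, b) * ser_mult (ser_pow u a) (ser_pow v b) \<alpha>)"

definition elem :: "nat \<Rightarrow> nat \<Rightarrow> ser \<Rightarrow> ser \<Rightarrow> (nat \<times> nat \<Rightarrow> complex) \<Rightarrow> ser" where
  "elem p q h1 h2 c = ser_mult (ser_mult h1 h2) (subst2 (p + q) c (rx2 p) (ry2 p q))"

definition Espace :: "nat \<Rightarrow> nat \<Rightarrow> ser set" where
  "Espace p q = {f. \<exists>(N::nat) ks ls h1 h2 c.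
      f = (\<Sum>i<N. elem p q (h1 i) (h2 i) (c i))
      \<and> (\<forall>i<N. harm_x p (ks i) (h1 i) \<and> harm_y p q (ls i) (h2 i))}"

definition K_homog :: "nat \<Rightarrow> nat \<Rightarrow> real \<Rightarrow> real \<Rightarrow> ser \<Rightarrow> bool" where
  "K_homog p q kp km f \<longleftrightarrow> (\<exists>k l (N::nat) h1 h2 c.
      real k + real p / 2 = kp \<and> real l + real q / 2 = km
      \<and> f = (\<Sum>i<N. elem p q (h1 i) (h2 i) (c i))
      \<and> (\<forall>i<N. harm_x p k (h1 i) \<and> harm_y p q l (h2 i)))"

definition Hop :: "nat \<Rightarrow> nat \<Rightarrow> ser \<Rightarrow> ser" where
  "Hop p q f = - Eul_x p f + Eul_y p q f
                + smul (complex_of_real ((real q - real p) / 2)) f"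

definition Xplus :: "nat \<Rightarrow> nat \<Rightarrow> ser \<Rightarrow> ser" where
  "Xplus p q f = smul (-1/2) (Lap_x p f + ser_mult (ry2 p q) f)"

definition Xminus :: "nat \<Rightarrow> nat \<Rightarrow> ser \<Rightarrow> ser" where
  "Xminus p q f = smul (1/2) (ser_mult (rx2 p) f + Lap_y p q f)"

definition Mplus :: "nat \<Rightarrow> nat \<Rightarrow> nat \<Rightarrow> ser set" where
  "Mplus p q m = {f \<in> Espace p q. Hop p q f = smul (of_nat m) f \<and> Xplus p q f = 0
                     \<and> (Xminus p q ^^ Suc m) f = 0}"

definition Mminus :: "nat \<Rightarrow> nat \<Rightarrow> nat \<Rightarrow> ser set" where
  "Mminus p q m = {f \<in> Espace p q. Hop p q f = smul (- of_nat m) f \<and> Xminus p q f = 0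
                     \<and> (Xplus p q ^^ Suc m) f = 0}"

section \<open>The representation pi on the basis X_{i,j} (0-based indices)\<close>

definition pi_X :: "nat \<Rightarrow> nat \<Rightarrow> nat \<Rightarrow> ser \<Rightarrow> ser" where
  "pi_X p i j f =
     (if i < p \<and> j < p then mulvar i (dvar j f) - mulvar j (dvar i f)
      else if p \<le> i \<and> p \<le> j then - mulvar i (dvar j f) + mulvar j (dvar i f)
      else if i < p then smul (- \<i>) (mulvar i (mulvar j f) + dvar i (dvar j f))
      else smul \<i> (mulvar j (mulvar i f) + dvar j (dvar i f)))"

definition eps :: "nat \<Rightarrow> nat \<Rightarrow> complex" where
  "eps p i = (if i < p then 1 else -1)"

section \<open>2-tensors in gl_n (x) gl_n, as coefficients w.r.t. E_{a,b} (x) E_{c,d}\<close>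

type_synonym tens = "nat \<Rightarrow> nat \<Rightarrow> nat \<Rightarrow> nat \<Rightarrow> complex"
type_synonym mat = "nat \<Rightarrow> nat \<Rightarrow> complex"

definition tp :: "mat \<Rightarrow> mat \<Rightarrow> tens" where
  "tp A B = (\<lambda>a b c d. A a b * B c d)"

definition Mmat :: "nat \<Rightarrow> nat \<Rightarrow> mat" where
  "Mmat i k = (\<lambda>a b. (if a = i \<and> b = k then 1 else 0) - (if a = k \<and> b = i then 1 else 0))"

definition Qnat :: "nat \<Rightarrow> tens" where
  "Qnat n = (\<Sum>i<n. \<Sum>k<n. tp (Mmat i k) (Mmat k i))"

definition Snat :: "nat \<Rightarrow> nat \<Rightarrow> nat \<Rightarrow> tens" where
  "Snat n i j = (\<lambda>a b c d.
      (1/2) * (\<Sum>k<n. tp (Mmat i k) (Mmat k j) a b c d + tp (Mmat k j) (Mmat i k) a b c d)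
      - (if i = j then 1 / of_nat n else 0) * Qnat n a b c d)"

text \<open>diagonal entries of I_{p,q}^{1/2}\<close>
definition sq :: "nat \<Rightarrow> nat \<Rightarrow> complex" where
  "sq p a = (if a < p then 1 else \<i>)"

text \<open>Phi^{-1}(Y) = I^{-1/2} Y I^{1/2}, extended to tensors as Phi^{-1} (x) Phi^{-1}\<close>
definition Phi_inv_tens :: "nat \<Rightarrow> tens \<Rightarrow> tens" where
  "Phi_inv_tens p T = (\<lambda>a b c d. (sq p b / sq p a) * (sq p d / sq p c) * T a b c d)"

definition Xi :: "nat \<Rightarrow> nat \<Rightarrow> tens" where
  "Xi p q = Phi_inv_tens p (\<lambda>a b c d. (1/2) *
      ((\<Sum>i<p. Snat (p+q) i i a b c d) - (\<Sum>i\<in>{p..<p+q}. Snat (p+q) i i a b c d)))"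

text \<open>The coordinate of X_{i,j} (i<j) of an
  element Y of g is eps_j * Y_{i,j}; hence T = sum eps_j eps_l T(i,j,k,l) X_{i,j} (x) X_{k,l},
  and gamma_2 followed by pi sends X_{i,j} (x) X_{k,l} to pi(X_{i,j}) o pi(X_{k,l}).\<close>
definition pi_gamma2 :: "nat \<Rightarrow> nat \<Rightarrow> tens \<Rightarrow> ser \<Rightarrow> ser" where
  "pi_gamma2 p q T f = (\<Sum>i<p+q. \<Sum>j\<in>{i<..<p+q}. \<Sum>k<p+q. \<Sum>l\<in>{k<..<p+q}.
       smul (eps p j * eps p l * T i j k l) (pi_X p i j (pi_X p k l f)))"

definition Xihat :: "nat \<Rightarrow> nat \<Rightarrow> ser \<Rightarrow> ser" where
  "Xihat p q = pi_gamma2 p q (Xi p q)"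

end

theory Submission
  imports Defs "HOL-Library.FuncSet"
begin

lemma sum_ser_apply: "(\<Sum>i\<in>A. F i) (x::'b) = (\<Sum>i\<in>A. F i x)"
  for F :: "'a \<Rightarrow> 'b \<Rightarrow> 'c::comm_monoid_add"
  by (induction A rule: infinite_finite_induct) auto

lemma smul_apply[simp]: "smul c f a = c * f a" by (simp add: smul_def)

lemma mulvar_apply: "mulvar i f a = (if 0 < a i then f (a(i := a i - 1)) else 0)"
  by (simp add: mulvar_def)
lemma dvar_apply: "dvar i f a = of_nat (Suc (a i)) * f (a(i := Suc (a i)))"
  by (simp add: dvar_def)

lemma mulvar_add[simp]: "mulvar i (f + g) = mulvar i f + mulvar i g"
  by (rule ext) (simp add: mulvar_def)
lemma mulvar_diff[simp]: "mulvar i (f - g) = mulvar i f - mulvar i g"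
  by (rule ext) (simp add: mulvar_def)
lemma mulvar_uminus[simp]: "mulvar i (- f) = - mulvar i f"
  by (rule ext) (simp add: mulvar_def)
lemma mulvar_zero[simp]: "mulvar i 0 = 0"
  by (rule ext) (simp add: mulvar_def)
lemma mulvar_smul[simp]: "mulvar i (smul c f) = smul c (mulvar i f)"
  by (rule ext) (simp add: mulvar_def)
lemma mulvar_sum: "mulvar i (\<Sum>j\<in>A. F j) = (\<Sum>j\<in>A. mulvar i (F j))"
  by (rule ext) (simp add: mulvar_def sum_ser_apply)

lemma dvar_add[simp]: "dvar i (f + g) = dvar i f + dvar i g"
  by (rule ext) (simp add: dvar_def algebra_simps)
lemma dvar_diff[simp]: "dvar i (f - g) = dvar i f - dvar i g"
  by (rule ext) (simp add: dvar_def algebra_simps)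
lemma dvar_uminus[simp]: "dvar i (- f) = - dvar i f"
  by (rule ext) (simp add: dvar_def)
lemma dvar_zero[simp]: "dvar i 0 = 0"
  by (rule ext) (simp add: dvar_def)
lemma dvar_smul[simp]: "dvar i (smul c f) = smul c (dvar i f)"
  by (rule ext) (simp add: dvar_def)
lemma dvar_sum: "dvar i (\<Sum>j\<in>A. F j) = (\<Sum>j\<in>A. dvar i (F j))"
  by (rule ext) (simp add: dvar_def sum_ser_apply sum_distrib_left)

lemma smul_add[simp]: "smul c (f + g) = smul c f + smul c g"
  by (rule ext) (simp add: algebra_simps)
lemma smul_diff[simp]: "smul c (f - g) = smul c f - smul c g"
  by (rule ext) (simp add: algebra_simps)
lemma smul_zero[simp]: "smul c 0 = 0" by (rule ext) simp
lemma smul_0[simp]: "smul 0 f = 0" by (rule ext) simp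
lemma smul_1[simp]: "smul 1 f = f" by (rule ext) simp
lemma smul_smul[simp]: "smul c (smul d f) = smul (c * d) f" by (rule ext) simp
lemma smul_sum: "smul c (\<Sum>j\<in>A. F j) = (\<Sum>j\<in>A. smul c (F j))"
  by (rule ext) (simp add: sum_ser_apply sum_distrib_left)

lemma dvar_mulvar: "dvar i (mulvar j f) = mulvar j (dvar i f) + (if i = j then f else 0)"
proof (rule ext)
  fix a :: mon
  show "dvar i (mulvar j f) a = (mulvar j (dvar i f) + (if i = j then f else 0)) a"
  proof (cases "i = j")
    case True
    then show ?thesis
      by (cases "a i") (auto simp: dvar_def mulvar_def fun_upd_idem algebra_simps)
  next
    case False
    then show ?thesis
      by (auto simp: dvar_def mulvar_def fun_upd_twist)
  qed
qed

lemma mulvar_comm: "mulvar i (mulvar j f) = mulvar j (mulvar i f)"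
  by (rule ext) (cases "i = j", auto simp: mulvar_def fun_upd_twist)

lemma dvar_comm: "dvar i (dvar j f) = dvar j (dvar i f)"
  by (rule ext) (cases "i = j", auto simp: dvar_def fun_upd_twist)

lemma dvar_mulvar_ne: "i \<noteq> j \<Longrightarrow> dvar i (mulvar j f) = mulvar j (dvar i f)"
  by (simp add: dvar_mulvar)
lemma dvar_mulvar_eq: "dvar i (mulvar i f) = mulvar i (dvar i f) + f"
  by (simp add: dvar_mulvar)

definition SB :: "mon \<Rightarrow> mon set" where "SB a = {b. \<forall>i. b i \<le> a i}"
definition fsupp :: "mon \<Rightarrow> bool" where "fsupp a \<longleftrightarrow> finite {i. a i \<noteq> 0}"

lemma ser_mult_SB: "ser_mult f g a = (\<Sum>b\<in>SB a. f b * g (\<lambda>i. a i - b i))"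
  by (simp add: ser_mult_def SB_def)

lemma finite_SB: assumes "fsupp a" shows "finite (SB a)"
proof -
  let ?F = "{i. a i \<noteq> 0}"
  have fin: "finite ?F" using assms by (simp add: fsupp_def)
  let ?e = "\<lambda>g::nat\<Rightarrow>nat. \<lambda>i. if i \<in> ?F then g i else 0"
  have "SB a \<subseteq> ?e ` (PiE ?F (\<lambda>i. {..a i}))"
  proof
    fix b assume b: "b \<in> SB a"
    have "b = ?e (restrict b ?F)"
    proof
      fix i
      have "b i \<le> a i" using b by (simp add: SB_def)
      then show "b i = ?e (restrict b ?F) i"
        by (cases "a i = 0") (simp_all add: restrict_def)
    qed
    moreover have "restrict b ?F \<in> PiE ?F (\<lambda>i. {..a i})" using b by (auto simp: SB_def)
    ultimately show "b \<in> ?e ` (PiE ?F (\<lambda>i. {..a i}))" by blast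
  qed
  moreover have "finite (PiE ?F (\<lambda>i. {..a i}))" using fin by (simp add: finite_PiE)
  ultimately show ?thesis using finite_imageI finite_subset by blast
qed

lemma infinite_SB: assumes "\<not> fsupp a" shows "infinite (SB a)"
proof
  assume fin: "finite (SB a)"
  let ?g = "\<lambda>i. (\<lambda>j. if j = i then a i else (0::nat))"
  have "inj_on ?g {i. a i \<noteq> 0}"
  proof (rule inj_onI)
    fix x y assume x: "x \<in> {i. a i \<noteq> 0}" and eq: "?g x = ?g y"
    have h: "a x = (if x = y then a y else 0)" using fun_cong[OF eq, of x] by simp
    show "x = y"
    proof (rule ccontr)
      assume "x \<noteq> y" with h x show False by simp
    qed
  qed
  moreover have "?g ` {i. a i \<noteq> 0} \<subseteq> SB a" by (auto simp: SB_def)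
  ultimately have "finite {i. a i \<noteq> 0}" using fin finite_imageD finite_subset by blast
  then show False using assms by (simp add: fsupp_def)
qed

lemma ser_mult_nfsupp: "\<not> fsupp a \<Longrightarrow> ser_mult f g a = 0"
  using infinite_SB by (simp add: ser_mult_SB)

lemma fsupp_upd: "fsupp (a(i := x)) \<longleftrightarrow> fsupp a"
proof -
  have 1: "{j. (a(i:=x)) j \<noteq> 0} \<subseteq> insert i {j. a j \<noteq> 0}" by auto
  have 2: "{j. a j \<noteq> 0} \<subseteq> insert i {j. (a(i:=x)) j \<noteq> 0}" by auto
  show ?thesis unfolding fsupp_def
  proof
    assume "finite {j. (a(i:=x)) j \<noteq> 0}" then show "finite {j. a j \<noteq> 0}"
      using 2 finite_insert finite_subset by (metis (no_types, lifting))
  next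
    assume "finite {j. a j \<noteq> 0}" then show "finite {j. (a(i:=x)) j \<noteq> 0}"
      using 1 finite_insert finite_subset by (metis (no_types, lifting))
  qed
qed

definition good :: "ser \<Rightarrow> bool" where "good f \<longleftrightarrow> (\<forall>a. \<not> fsupp a \<longrightarrow> f a = 0)"

lemma good_ser_mult: "good (ser_mult f g)" by (simp add: good_def ser_mult_nfsupp)
lemma good_add: "good f \<Longrightarrow> good g \<Longrightarrow> good (f + g)" by (simp add: good_def)
lemma good_sum: "(\<And>i. i \<in> A \<Longrightarrow> good (F i)) \<Longrightarrow> good (\<Sum>i\<in>A. F i)"
  by (induction A rule: infinite_finite_induct) (auto simp: good_def)

lemma ser_mult_add1: "ser_mult (f + g) h = ser_mult f h + ser_mult g h"
  by (rule ext) (simp add: ser_mult_def algebra_simps sum.distrib)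
lemma ser_mult_add2: "ser_mult h (f + g) = ser_mult h f + ser_mult h g"
  by (rule ext) (simp add: ser_mult_def algebra_simps sum.distrib)
lemma ser_mult_diff1: "ser_mult (f - g) h = ser_mult f h - ser_mult g h"
  by (rule ext) (simp add: ser_mult_def algebra_simps sum_subtractf)
lemma ser_mult_diff2: "ser_mult h (f - g) = ser_mult h f - ser_mult h g"
  by (rule ext) (simp add: ser_mult_def algebra_simps sum_subtractf)
lemma ser_mult_zero1[simp]: "ser_mult 0 h = 0"
  by (rule ext) (simp add: ser_mult_def)
lemma ser_mult_zero2[simp]: "ser_mult h 0 = 0"
  by (rule ext) (simp add: ser_mult_def)
lemma ser_mult_smul1: "ser_mult (smul c f) h = smul c (ser_mult f h)"
  by (rule ext) (simp add: ser_mult_def sum_distrib_left algebra_simps)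
lemma ser_mult_smul2: "ser_mult h (smul c f) = smul c (ser_mult h f)"
  by (rule ext) (simp add: ser_mult_def sum_distrib_left algebra_simps)
lemma ser_mult_sum1: "ser_mult (\<Sum>i\<in>A. F i) h = (\<Sum>i\<in>A. ser_mult (F i) h)"
proof (induction A rule: infinite_finite_induct)
  case (insert x B) then show ?case by (metis sum.insert ser_mult_add1)
next
  case (infinite A) then show ?case by (metis sum.infinite ser_mult_zero1)
qed (metis sum.empty ser_mult_zero1)
lemma ser_mult_sum2: "ser_mult h (\<Sum>i\<in>A. F i) = (\<Sum>i\<in>A. ser_mult h (F i))"
proof (induction A rule: infinite_finite_induct)
  case (insert x B) then show ?case by (metis sum.insert ser_mult_add2)
next
  case (infinite A) then show ?case by (metis sum.infinite ser_mult_zero2)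
qed (metis sum.empty ser_mult_zero2)

lemma SB_flip: "b \<in> SB a \<Longrightarrow> (\<lambda>i. a i - (a i - b i)) = b"
  by (rule ext) (simp add: SB_def diff_diff_cancel)

lemma SB_flip_mem: "(\<lambda>i. a i - b i) \<in> SB a"
  by (simp add: SB_def)

lemma ser_mult_comm: "ser_mult f g = ser_mult g f"
proof (rule ext)
  fix a
  show "ser_mult f g a = ser_mult g f a"
    unfolding ser_mult_SB
    by (rule sum.reindex_bij_witness[where i="\<lambda>b i. a i - b i" and j="\<lambda>b i. a i - b i"])
       (simp_all add: SB_flip SB_flip_mem mult.commute)
qed

lemma ser_mult_one: assumes "good f" shows "ser_mult ser_one f = f"
proof (rule ext)
  fix a
  show "ser_mult ser_one f a = f a"
  proof (cases "fsupp a")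
    case True
    have "ser_mult ser_one f a = (\<Sum>b\<in>SB a. if b = (\<lambda>_. 0) then f (\<lambda>i. a i - b i) else 0)"
      unfolding ser_mult_SB ser_one_def by (rule sum.cong) auto
    also have "\<dots> = f a" using finite_SB[OF True] by (simp add: SB_def)
    finally show ?thesis .
  next
    case False
    then show ?thesis using assms by (simp add: good_def ser_mult_nfsupp)
  qed
qed

lemma unitmon_iff: "(a = unitmon i) \<longleftrightarrow> (0 < a i \<and> a(i := a i - 1) = (\<lambda>_. 0))"
proof
  assume "a = unitmon i" then show "0 < a i \<and> a(i := a i - 1) = (\<lambda>_. 0)"
    by (simp add: unitmon_def fun_eq_iff)
next
  assume h: "0 < a i \<and> a(i := a i - 1) = (\<lambda>_. 0)"
  show "a = unitmon i"
  proof
    fix j show "a j = unitmon i j"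
    proof (cases "j = i")
      case True
      have "a i - 1 = 0" using fun_cong[OF conjunct2[OF h], of i] by simp
      then show ?thesis using h True by (simp add: unitmon_def)
    next
      case False
      then show ?thesis using fun_cong[OF conjunct2[OF h], of j] by (simp add: unitmon_def)
    qed
  qed
qed

lemma ser_var_mulvar: "ser_var i = mulvar i ser_one"
proof
  fix a show "ser_var i a = mulvar i ser_one a"
    using unitmon_iff[of a i] by (simp add: ser_var_def mulvar_def ser_one_def)
qed

lemma SB_iff: "b \<in> SB a \<longleftrightarrow> (\<forall>j. b j \<le> a j)" by (simp add: SB_def)

lemma SB_upd_Suc: "b \<in> SB (a(i := a i - 1)) \<Longrightarrow> 0 < a i \<Longrightarrow> b(i := Suc (b i)) \<in> SB a"
  unfolding SB_iff
proof
  fix j assume h: "\<forall>j. b j \<le> (a(i := a i - 1)) j" and p: "0 < a i"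
  show "(b(i := Suc (b i))) j \<le> a j"
  proof (cases "j = i")
    case True then show ?thesis using spec[OF h, of i] p by simp
  next
    case False then show ?thesis using spec[OF h, of j] by simp
  qed
qed

lemma SB_upd_pred: "b \<in> SB a \<Longrightarrow> b(i := b i - 1) \<in> SB (a(i := a i - 1))"
  unfolding SB_iff
proof
  fix j assume h: "\<forall>j. b j \<le> a j"
  show "(b(i := b i - 1)) j \<le> (a(i := a i - 1)) j"
  proof (cases "j = i")
    case True then show ?thesis using spec[OF h, of i] by simp
  next
    case False then show ?thesis using spec[OF h, of j] by simp
  qed
qed

lemma mulvar_ser_mult: "mulvar i (ser_mult g f) = ser_mult (mulvar i g) f"
proof (rule ext)
  fix a
  show "mulvar i (ser_mult g f) a = ser_mult (mulvar i g) f a"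
  proof (cases "fsupp a")
    case False
    then show ?thesis by (simp add: mulvar_def ser_mult_nfsupp fsupp_upd)
  next
    case True
    show ?thesis
    proof (cases "0 < a i")
      case False
      have "ser_mult (mulvar i g) f a = 0"
        unfolding ser_mult_SB
      proof (rule sum.neutral, rule ballI)
        fix b assume "b \<in> SB a"
        then have "b i \<le> a i" by (simp add: SB_iff)
        then show "mulvar i g b * f (\<lambda>j. a j - b j) = 0" using False by (simp add: mulvar_def)
      qed
      then show ?thesis using False by (simp add: mulvar_def)
    next
      case pos: True
      let ?a' = "a(i := a i - 1)"
      have "mulvar i (ser_mult g f) a = (\<Sum>b\<in>SB ?a'. g b * f (\<lambda>j. ?a' j - b j))"
        using pos by (simp add: mulvar_def ser_mult_SB)
      also have "\<dots> = (\<Sum>b\<in>SB a. mulvar i g b * f (\<lambda>j. a j - b j))"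
      proof (rule sum.reindex_bij_witness_not_neutral[where S'="{}" and T'="{b\<in>SB a. b i = 0}"
            and j="\<lambda>b. b(i := Suc (b i))" and i="\<lambda>b. b(i := b i - 1)"])
        show "finite {b \<in> SB a. b i = 0}" using finite_SB[OF True] by simp
        show "\<And>b. b \<in> SB ?a' - {} \<Longrightarrow> b(i := Suc (b i)) \<in> SB a - {b \<in> SB a. b i = 0}"
          using SB_upd_Suc pos by simp
        show "\<And>b. b \<in> SB a - {b \<in> SB a. b i = 0} \<Longrightarrow> b(i := b i - 1) \<in> SB ?a' - {}"
          using SB_upd_pred by simp
        show "\<And>b. b \<in> SB a - {b \<in> SB a. b i = 0} \<Longrightarrow> b(i := b i - 1, i := Suc ((b(i := b i - 1)) i)) = b"
          by simp
        show "\<And>b. b \<in> SB ?a' - {} \<Longrightarrow> b(i := Suc (b i), i := (b(i := Suc (b i))) i - 1) = b"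
          by simp
        show "\<And>b. b \<in> {b \<in> SB a. b i = 0} \<Longrightarrow> mulvar i g b * f (\<lambda>j. a j - b j) = 0"
          by (simp add: mulvar_def)
        show "\<And>b. b \<in> SB ?a' \<Longrightarrow> mulvar i g (b(i := Suc (b i))) * f (\<lambda>j. a j - (b(i := Suc (b i))) j) = g b * f (\<lambda>j. ?a' j - b j)"
        proof -
          fix b assume "b \<in> SB ?a'"
          have "(\<lambda>j. a j - (b(i := Suc (b i))) j) = (\<lambda>j. ?a' j - b j)"
          proof
            fix j show "a j - (b(i := Suc (b i))) j = ?a' j - b j" by (cases "j = i") simp_all
          qed
          then show "?thesis b" by (simp add: mulvar_def)
        qed
      qed auto
      also have "\<dots> = ser_mult (mulvar i g) f a" by (simp add: ser_mult_SB)
      finally show ?thesis .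
    qed
  qed
qed

lemma mulvar_ser_mult2: "mulvar i (ser_mult g f) = ser_mult g (mulvar i f)"
  by (metis mulvar_ser_mult ser_mult_comm)

lemma SB_1: "b \<in> SB a \<Longrightarrow> b(i := Suc (b i)) \<in> SB (a(i := Suc (a i)))"
  unfolding SB_iff
proof
  fix j assume h: "\<forall>j. b j \<le> a j"
  show "(b(i := Suc (b i))) j \<le> (a(i := Suc (a i))) j"
    using spec[OF h, of j] spec[OF h, of i] by (cases "j = i") simp_all
qed

lemma SB_2: "b \<in> SB (a(i := Suc (a i))) \<Longrightarrow> 0 < b i \<Longrightarrow> b(i := b i - 1) \<in> SB a"
  unfolding SB_iff
proof
  fix j assume h: "\<forall>j. b j \<le> (a(i := Suc (a i))) j" and p: "0 < b i"
  show "(b(i := b i - 1)) j \<le> a j"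
    using spec[OF h, of j] spec[OF h, of i] p by (cases "j = i") simp_all
qed

lemma SB_3: "b \<in> SB a \<Longrightarrow> b \<in> SB (a(i := Suc (a i)))"
  unfolding SB_iff
proof
  fix j assume h: "\<forall>j. b j \<le> a j"
  show "b j \<le> (a(i := Suc (a i))) j"
    using spec[OF h, of j] by (cases "j = i") simp_all
qed

lemma SB_4: "b \<in> SB (a(i := Suc (a i))) \<Longrightarrow> b i \<noteq> Suc (a i) \<Longrightarrow> b \<in> SB a"
  unfolding SB_iff
proof
  fix j assume h: "\<forall>j. b j \<le> (a(i := Suc (a i))) j" and p: "b i \<noteq> Suc (a i)"
  show "b j \<le> a j"
    using spec[OF h, of j] p by (cases "j = i") simp_all
qed

lemma SB_le: "b \<in> SB a \<Longrightarrow> b i \<le> a i" by (simp add: SB_iff)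

lemma dvar_ser_mult: "dvar i (ser_mult f g) = ser_mult (dvar i f) g + ser_mult f (dvar i g)"
proof (rule ext)
  fix a
  let ?a' = "a(i := Suc (a i))"
  show "dvar i (ser_mult f g) a = (ser_mult (dvar i f) g + ser_mult f (dvar i g)) a"
  proof (cases "fsupp a")
    case False
    then show ?thesis by (simp add: dvar_def ser_mult_nfsupp fsupp_upd)
  next
    case True
    have fa': "fsupp ?a'" using True by (simp add: fsupp_upd)
    have "dvar i (ser_mult f g) a = (\<Sum>b\<in>SB ?a'. of_nat (Suc (a i)) * (f b * g (\<lambda>j. ?a' j - b j)))"
      by (simp add: dvar_def ser_mult_SB sum_distrib_left)
    also have "\<dots> = (\<Sum>b\<in>SB ?a'. of_nat (b i) * (f b * g (\<lambda>j. ?a' j - b j))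
                   + of_nat (Suc (a i) - b i) * (f b * g (\<lambda>j. ?a' j - b j)))"
    proof (rule sum.cong[OF refl])
      fix b assume "b \<in> SB ?a'"
      then have "b i \<le> Suc (a i)" using SB_le[of b ?a' i] by simp
      then have "(of_nat (Suc (a i)) :: complex) = of_nat (b i) + of_nat (Suc (a i) - b i)"
        by (simp add: of_nat_diff)
      then show "of_nat (Suc (a i)) * (f b * g (\<lambda>j. ?a' j - b j))
          = of_nat (b i) * (f b * g (\<lambda>j. ?a' j - b j)) + of_nat (Suc (a i) - b i) * (f b * g (\<lambda>j. ?a' j - b j))"
        by (simp add: distrib_right)
    qed
    also have "\<dots> = (\<Sum>b\<in>SB ?a'. of_nat (b i) * (f b * g (\<lambda>j. ?a' j - b j)))
                   + (\<Sum>b\<in>SB ?a'. of_nat (Suc (a i) - b i) * (f b * g (\<lambda>j. ?a' j - b j)))"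
      by (rule sum.distrib)
    also have "(\<Sum>b\<in>SB ?a'. of_nat (b i) * (f b * g (\<lambda>j. ?a' j - b j))) = ser_mult (dvar i f) g a"
      unfolding ser_mult_SB
    proof (rule sum.reindex_bij_witness_not_neutral[symmetric, where S'="{}" and T'="{b\<in>SB ?a'. b i = 0}"
            and j="\<lambda>b. b(i := Suc (b i))" and i="\<lambda>b. b(i := b i - 1)"])
      show "finite {b \<in> SB ?a'. b i = 0}" using finite_SB[OF fa'] by simp
      show "\<And>b. b \<in> SB a - {} \<Longrightarrow> b(i := Suc (b i)) \<in> SB ?a' - {b \<in> SB ?a'. b i = 0}"
        using SB_1 by simp
      show "\<And>b. b \<in> SB ?a' - {b \<in> SB ?a'. b i = 0} \<Longrightarrow> b(i := b i - 1) \<in> SB a - {}"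
        using SB_2 by simp
      show "\<And>b. b \<in> SB ?a' - {b \<in> SB ?a'. b i = 0} \<Longrightarrow> b(i := b i - 1, i := Suc ((b(i := b i - 1)) i)) = b"
        by simp
      show "\<And>b. b \<in> SB a - {} \<Longrightarrow> b(i := Suc (b i), i := (b(i := Suc (b i))) i - 1) = b"
        by simp
      show "\<And>b. b \<in> {b\<in>SB ?a'. b i = 0} \<Longrightarrow> of_nat (b i) * (f b * g (\<lambda>j. ?a' j - b j)) = 0"
        by simp
      show "\<And>b. b \<in> SB a \<Longrightarrow> of_nat ((b(i := Suc (b i))) i) * (f (b(i := Suc (b i))) * g (\<lambda>j. ?a' j - (b(i := Suc (b i))) j))
           = dvar i f b * g (\<lambda>j. a j - b j)"
      proof -
        fix b assume "b \<in> SB a"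
        have "(\<lambda>j. ?a' j - (b(i := Suc (b i))) j) = (\<lambda>j. a j - b j)"
        proof
          fix j show "?a' j - (b(i := Suc (b i))) j = a j - b j" by (cases "j = i") simp_all
        qed
        then show "?thesis b" by (simp add: dvar_def)
      qed
    qed simp_all
    also have "(\<Sum>b\<in>SB ?a'. of_nat (Suc (a i) - b i) * (f b * g (\<lambda>j. ?a' j - b j))) = ser_mult f (dvar i g) a"
    proof -
      have sub: "SB a \<subseteq> SB ?a'" using SB_3 by blast
      have "(\<Sum>b\<in>SB ?a'. of_nat (Suc (a i) - b i) * (f b * g (\<lambda>j. ?a' j - b j)))
          = (\<Sum>b\<in>SB a. of_nat (Suc (a i) - b i) * (f b * g (\<lambda>j. ?a' j - b j)))"
      proof (rule sum.mono_neutral_right[OF finite_SB[OF fa'] sub], rule ballI)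
        fix b assume "b \<in> SB ?a' - SB a"
        then have "b \<in> SB ?a'" "b \<notin> SB a" by simp_all
        then have "b i = Suc (a i)" using SB_4 by blast
        then show "of_nat (Suc (a i) - b i) * (f b * g (\<lambda>j. ?a' j - b j)) = 0" by simp
      qed
      also have "\<dots> = (\<Sum>b\<in>SB a. f b * dvar i g (\<lambda>j. a j - b j))"
      proof (rule sum.cong[OF refl])
        fix b assume "b \<in> SB a"
        then have le: "b i \<le> a i" by (rule SB_le)
        have E1: "(\<lambda>j. ?a' j - b j) = (\<lambda>j. a j - b j)(i := Suc (a i - b i))"
        proof
          fix j show "?a' j - b j = ((\<lambda>j. a j - b j)(i := Suc (a i - b i))) j"
            using le by (cases "j = i") simp_all
        qed
        have E2: "Suc (a i) - b i = Suc (a i - b i)" using le by simp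
        have E3: "dvar i g (\<lambda>j. a j - b j) = of_nat (Suc (a i - b i)) * g ((\<lambda>j. a j - b j)(i := Suc (a i - b i)))"
          unfolding dvar_def by (rule refl)
        show "of_nat (Suc (a i) - b i) * (f b * g (\<lambda>j. ?a' j - b j)) = f b * dvar i g (\<lambda>j. a j - b j)"
          unfolding E1 E2 E3 by (simp only: mult.left_commute)
      qed
      finally show ?thesis by (simp add: ser_mult_SB)
    qed
    finally show ?thesis by simp
  qed
qed

definition Lop :: "nat \<Rightarrow> nat \<Rightarrow> ser \<Rightarrow> ser" where
  "Lop a b g = mulvar a (dvar b g) - mulvar b (dvar a g)"
definition RR :: "nat set \<Rightarrow> ser \<Rightarrow> ser" where
  "RR I g = (\<Sum>i\<in>I. mulvar i (mulvar i g))"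
definition LL :: "nat set \<Rightarrow> ser \<Rightarrow> ser" where
  "LL I g = (\<Sum>i\<in>I. dvar i (dvar i g))"
definition EE :: "nat set \<Rightarrow> ser \<Rightarrow> ser" where
  "EE I g = (\<Sum>i\<in>I. mulvar i (dvar i g))"

lemma Lop_add[simp]: "Lop a b (f + g) = Lop a b f + Lop a b g"
  by (simp add: Lop_def)
lemma Lop_diff[simp]: "Lop a b (f - g) = Lop a b f - Lop a b g"
  by (simp add: Lop_def)
lemma Lop_zero[simp]: "Lop a b 0 = 0"
  by (simp add: Lop_def)
lemma Lop_smul[simp]: "Lop a b (smul c f) = smul c (Lop a b f)"
  by (simp add: Lop_def)
lemma Lop_sum: "Lop a b (\<Sum>j\<in>A. F j) = (\<Sum>j\<in>A. Lop a b (F j))"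
  by (simp add: Lop_def mulvar_sum dvar_sum sum_subtractf)

lemma Lop_ser_mult: "Lop a b (ser_mult F G) = ser_mult (Lop a b F) G + ser_mult F (Lop a b G)"
proof -
  have "Lop a b (ser_mult F G) =
     (ser_mult (mulvar a (dvar b F)) G + ser_mult F (mulvar a (dvar b G)))
     - (ser_mult (mulvar b (dvar a F)) G + ser_mult F (mulvar b (dvar a G)))"
    unfolding Lop_def dvar_ser_mult mulvar_add
    by (simp add: mulvar_ser_mult[symmetric] mulvar_ser_mult2[symmetric])
  also have "\<dots> = ser_mult (Lop a b F) G + ser_mult F (Lop a b G)"
    unfolding Lop_def ser_mult_diff1 ser_mult_diff2 by (simp add: algebra_simps)
  finally show ?thesis .
qed

lemma dvar_ser_one: "dvar b ser_one = 0"
  by (rule ext) (simp add: dvar_def ser_one_def fun_eq_iff, metis fun_upd_same nat.distinct(1))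

lemma Lop_ser_one: "Lop a b ser_one = 0"
  by (simp add: Lop_def dvar_ser_one)

lemma Lop_ser_pow: "Lop a b u = 0 \<Longrightarrow> Lop a b (ser_pow u k) = 0"
  by (induction k) (simp_all add: Lop_ser_one Lop_ser_mult)

lemma Lop_pow2: "Lop a b u = 0 \<Longrightarrow> Lop a b v = 0 \<Longrightarrow> Lop a b (ser_mult (ser_pow u k) (ser_pow v l)) = 0"
  by (simp add: Lop_ser_mult Lop_ser_pow)

lemma sum_upd_nat: "(a::nat) < n \<Longrightarrow> (\<Sum>i<n. (\<beta>(a := x)) i) + \<beta> a = (\<Sum>i<n. \<beta> i) + (x::nat)"
proof -
  assume a: "a < n"
  have r1: "(\<Sum>i<n. (\<beta>(a := x)) i) = (\<beta>(a := x)) a + (\<Sum>i\<in>{..<n} - {a}. (\<beta>(a := x)) i)"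
    using a by (intro sum.remove) auto
  have r2: "(\<Sum>i\<in>{..<n} - {a}. (\<beta>(a := x)) i) = (\<Sum>i\<in>{..<n} - {a}. \<beta> i)"
    by (rule sum.cong) auto
  have "(\<Sum>i<n. (\<beta>(a := x)) i) = x + (\<Sum>i\<in>{..<n} - {a}. \<beta> i)"
    using r1 r2 by simp
  moreover have "(\<Sum>i<n. \<beta> i) = \<beta> a + (\<Sum>i\<in>{..<n} - {a}. \<beta> i)"
    using a by (simp add: sum.remove[of "{..<n}" a])
  ultimately show ?thesis by simp
qed

lemma Lop_local:
  assumes "a < n" "b < n" "a \<noteq> b"
    and eq: "\<And>\<beta>. (\<Sum>i<n. \<beta> i) = (\<Sum>i<n. \<alpha> i) \<Longrightarrow> F \<beta> = F' \<beta>"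
  shows "Lop a b F \<alpha> = Lop a b F' \<alpha>"
proof -
  have 1: "mulvar a (dvar b F) \<alpha> = mulvar a (dvar b F') \<alpha>"
  proof (cases "0 < \<alpha> a")
    case True
    let ?\<gamma> = "\<alpha>(a := \<alpha> a - 1)"
    have "(\<Sum>i<n. (?\<gamma>(b := Suc (?\<gamma> b))) i) = (\<Sum>i<n. \<alpha> i)"
      using sum_upd_nat[OF assms(2), of ?\<gamma> "Suc (?\<gamma> b)"] sum_upd_nat[OF assms(1), of \<alpha> "\<alpha> a - 1"] True assms(3)
      by simp
    then show ?thesis using True by (simp add: mulvar_def dvar_def eq)
  qed (simp add: mulvar_def)
  have 2: "mulvar b (dvar a F) \<alpha> = mulvar b (dvar a F') \<alpha>"
  proof (cases "0 < \<alpha> b")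
    case True
    let ?\<gamma> = "\<alpha>(b := \<alpha> b - 1)"
    have "(\<Sum>i<n. (?\<gamma>(a := Suc (?\<gamma> a))) i) = (\<Sum>i<n. \<alpha> i)"
      using sum_upd_nat[OF assms(1), of ?\<gamma> "Suc (?\<gamma> a)"] sum_upd_nat[OF assms(2), of \<alpha> "\<alpha> b - 1"] True assms(3)
      by simp
    then show ?thesis using True by (simp add: mulvar_def dvar_def eq)
  qed (simp add: mulvar_def)
  show ?thesis using 1 2 by (simp add: Lop_def)
qed

lemma Lop_subst2:
  assumes "a < n" "b < n" "a \<noteq> b" "Lop a b u = 0" "Lop a b v = 0"
  shows "Lop a b (subst2 n c u v) = 0"
proof
  fix \<alpha> :: mon
  let ?N = "\<Sum>i<n. \<alpha> i"
  let ?F' = "\<Sum>a'\<le>?N. \<Sum>b'\<le>?N. smul (c (a', b')) (ser_mult (ser_pow u a') (ser_pow v b'))"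
  have "Lop a b (subst2 n c u v) \<alpha> = Lop a b ?F' \<alpha>"
    by (rule Lop_local[OF assms(1-3)]) (simp add: subst2_def sum_ser_apply)
  also have "Lop a b ?F' = 0"
    by (simp add: Lop_sum Lop_pow2 assms(4,5))
  finally show "Lop a b (subst2 n c u v) \<alpha> = 0 \<alpha>" by simp
qed

lemma RR_add[simp]: "RR I (f + g) = RR I f + RR I g" by (simp add: RR_def sum.distrib)
lemma RR_diff[simp]: "RR I (f - g) = RR I f - RR I g" by (simp add: RR_def sum_subtractf)
lemma RR_zero[simp]: "RR I 0 = 0" by (simp add: RR_def)
lemma RR_smul[simp]: "RR I (smul c f) = smul c (RR I f)" by (simp add: RR_def smul_sum)
lemma RR_sum: "RR I (\<Sum>j\<in>A. F j) = (\<Sum>j\<in>A. RR I (F j))"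
  by (simp add: RR_def mulvar_sum) (rule sum.swap)
lemma LL_add[simp]: "LL I (f + g) = LL I f + LL I g" by (simp add: LL_def sum.distrib)
lemma LL_diff[simp]: "LL I (f - g) = LL I f - LL I g" by (simp add: LL_def sum_subtractf)
lemma LL_zero[simp]: "LL I 0 = 0" by (simp add: LL_def)
lemma LL_smul[simp]: "LL I (smul c f) = smul c (LL I f)" by (simp add: LL_def smul_sum)
lemma LL_sum: "LL I (\<Sum>j\<in>A. F j) = (\<Sum>j\<in>A. LL I (F j))"
  by (simp add: LL_def dvar_sum) (rule sum.swap)
lemma EE_add[simp]: "EE I (f + g) = EE I f + EE I g" by (simp add: EE_def sum.distrib)
lemma EE_diff[simp]: "EE I (f - g) = EE I f - EE I g" by (simp add: EE_def sum_subtractf)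
lemma EE_zero[simp]: "EE I 0 = 0" by (simp add: EE_def)
lemma EE_smul[simp]: "EE I (smul c f) = smul c (EE I f)" by (simp add: EE_def smul_sum)
lemma EE_sum: "EE I (\<Sum>j\<in>A. F j) = (\<Sum>j\<in>A. EE I (F j))"
  by (simp add: EE_def mulvar_sum dvar_sum) (rule sum.swap)

lemma mulvar_if: "mulvar i (if c then f else 0) = (if c then mulvar i f else 0)" by simp
lemma dvar_if: "dvar i (if c then f else 0) = (if c then dvar i f else 0)" by simp

lemma sum_const_smul: "(\<Sum>b\<in>I. F) = smul (of_nat (card I)) F"
  by (rule ext) (simp add: sum_ser_apply)

lemma smul_two: "smul 2 f = f + f" by (rule ext) simp

lemma dvar_RR: "finite I \<Longrightarrow> dvar b (RR I g) = RR I (dvar b g) + (if b \<in> I then smul 2 (mulvar b g) else 0)"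
proof -
  assume fin: "finite I"
  have "dvar b (RR I g) = (\<Sum>i\<in>I. mulvar i (mulvar i (dvar b g)) + (if b = i then smul 2 (mulvar b g) else 0))"
    unfolding RR_def dvar_sum
    by (rule sum.cong[OF refl]) (simp add: dvar_mulvar smul_two)
  also have "\<dots> = RR I (dvar b g) + (if b \<in> I then smul 2 (mulvar b g) else 0)"
    using fin by (simp add: sum.distrib RR_def)
  finally show ?thesis .
qed

lemma sym_split:
  fixes G :: "nat \<Rightarrow> nat \<Rightarrow> 'a::ab_group_add"
  assumes fin: "finite I"
  shows "(\<Sum>a\<in>I. \<Sum>b\<in>{b\<in>I. a < b}. G a b + G b a) = (\<Sum>a\<in>I. \<Sum>b\<in>I. G a b) - (\<Sum>a\<in>I. G a a)"
proof -
  have L: "(\<Sum>a\<in>I. \<Sum>b\<in>{b\<in>I. a < b}. G a b + G b a)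
      = (\<Sum>a\<in>I. \<Sum>b\<in>I. if a < b then G a b else 0) + (\<Sum>a\<in>I. \<Sum>b\<in>I. if a < b then G b a else 0)"
    using fin by (simp add: sum.inter_filter[symmetric] sum.distrib if_distrib)
  have S: "(\<Sum>a\<in>I. \<Sum>b\<in>I. if a < b then G b a else 0) = (\<Sum>a\<in>I. \<Sum>b\<in>I. if b < a then G a b else 0)"
    by (rule sum.swap)
  have R: "(\<Sum>a\<in>I. \<Sum>b\<in>I. G a b) = (\<Sum>a\<in>I. \<Sum>b\<in>I. (if a < b then G a b else 0) + (if b < a then G a b else 0) + (if a = b then G a b else 0))"
    by (intro sum.cong refl) auto
  have D: "(\<Sum>a\<in>I. \<Sum>b\<in>I. if a = b then G a b else 0) = (\<Sum>a\<in>I. G a a)"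
    using fin by (intro sum.cong refl) simp
  show ?thesis using L S R D by (simp add: sum.distrib)
qed

definition CasI :: "nat set \<Rightarrow> ser \<Rightarrow> ser" where
  "CasI I g = (\<Sum>a\<in>I. \<Sum>b\<in>{b\<in>I. a < b}. Lop a b (Lop a b g))"

lemma CasI_add[simp]: "CasI I (f + g) = CasI I f + CasI I g" by (simp add: CasI_def sum.distrib)
lemma CasI_sum: "CasI I (\<Sum>j\<in>A. F j) = (\<Sum>j\<in>A. CasI I (F j))"
proof -
  have "CasI I (\<Sum>j\<in>A. F j) = (\<Sum>a\<in>I. \<Sum>b\<in>{b\<in>I. a < b}. \<Sum>j\<in>A. Lop a b (Lop a b (F j)))"
    unfolding CasI_def by (simp only: Lop_sum)
  also have "\<dots> = (\<Sum>a\<in>I. \<Sum>j\<in>A. \<Sum>b\<in>{b\<in>I. a < b}. Lop a b (Lop a b (F j)))"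
    by (rule sum.cong[OF refl], rule sum.swap)
  also have "\<dots> = (\<Sum>j\<in>A. CasI I (F j))"
    unfolding CasI_def by (rule sum.swap)
  finally show ?thesis .
qed

lemma CasI_formula:
  assumes fin: "finite I"
  shows "CasI I g = RR I (LL I g) - EE I (EE I g) + smul (2 - of_nat (card I)) (EE I g)"
proof -
  define T1 where "T1 a b = mulvar a (dvar b (mulvar a (dvar b g)))" for a b
  define T2 where "T2 a b = mulvar a (dvar b (mulvar b (dvar a g)))" for a b
  have LL1: "Lop a b (Lop a b g) = (T1 a b + T1 b a) - (T2 a b + T2 b a)" for a b
    by (simp add: Lop_def T1_def T2_def algebra_simps)
  have C: "CasI I g = ((\<Sum>a\<in>I. \<Sum>b\<in>I. T1 a b) - (\<Sum>a\<in>I. T1 a a)) - ((\<Sum>a\<in>I. \<Sum>b\<in>I. T2 a b) - (\<Sum>a\<in>I. T2 a a))"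
    unfolding CasI_def LL1 sum_subtractf sym_split[OF fin] ..
  have T12: "T1 a a = T2 a a" for a by (simp add: T1_def T2_def)
  have ST1: "(\<Sum>a\<in>I. \<Sum>b\<in>I. T1 a b) = RR I (LL I g) + EE I g"
  proof -
    have "(\<Sum>a\<in>I. \<Sum>b\<in>I. T1 a b) = (\<Sum>a\<in>I. \<Sum>b\<in>I. mulvar a (mulvar a (dvar b (dvar b g))) + (if b = a then mulvar a (dvar b g) else 0))"
      unfolding T1_def by (intro sum.cong refl) (simp add: dvar_mulvar)
    also have "\<dots> = RR I (LL I g) + EE I g"
      using fin by (simp add: sum.distrib RR_def LL_def EE_def mulvar_sum)
    finally show ?thesis .
  qed
  have EE2: "EE I (EE I g) = (\<Sum>a\<in>I. \<Sum>b\<in>I. mulvar a (mulvar b (dvar a (dvar b g)))) + EE I g"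
  proof -
    have "EE I (EE I g) = (\<Sum>a\<in>I. \<Sum>b\<in>I. mulvar a (mulvar b (dvar a (dvar b g))) + (if a = b then mulvar a (dvar b g) else 0))"
      unfolding EE_def mulvar_sum dvar_sum
      by (intro sum.cong refl) (simp add: dvar_mulvar)
    also have "\<dots> = (\<Sum>a\<in>I. \<Sum>b\<in>I. mulvar a (mulvar b (dvar a (dvar b g)))) + EE I g"
      using fin by (simp add: sum.distrib EE_def)
    finally show ?thesis .
  qed
  have ST2: "(\<Sum>a\<in>I. \<Sum>b\<in>I. T2 a b) = (EE I (EE I g) - EE I g) + smul (of_nat (card I)) (EE I g)"
  proof -
    have "(\<Sum>a\<in>I. \<Sum>b\<in>I. T2 a b) = (\<Sum>a\<in>I. \<Sum>b\<in>I. mulvar a (mulvar b (dvar a (dvar b g))) + mulvar a (dvar a g))"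
      unfolding T2_def by (intro sum.cong refl) (simp add: dvar_mulvar dvar_comm)
    also have "\<dots> = (\<Sum>a\<in>I. \<Sum>b\<in>I. mulvar a (mulvar b (dvar a (dvar b g)))) + (\<Sum>a\<in>I. \<Sum>b\<in>I. mulvar a (dvar a g))"
      by (simp only: sum.distrib)
    also have "(\<Sum>a\<in>I. \<Sum>b\<in>I. mulvar a (dvar a g)) = (\<Sum>b\<in>I. EE I g)"
      unfolding EE_def by (rule sum.swap)
    also have "\<dots> = smul (of_nat (card I)) (EE I g)" by (rule sum_const_smul)
    finally have A: "(\<Sum>a\<in>I. \<Sum>b\<in>I. T2 a b) = (\<Sum>a\<in>I. \<Sum>b\<in>I. mulvar a (mulvar b (dvar a (dvar b g)))) + smul (of_nat (card I)) (EE I g)" .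
    have B: "(\<Sum>a\<in>I. \<Sum>b\<in>I. mulvar a (mulvar b (dvar a (dvar b g)))) = EE I (EE I g) - EE I g"
      unfolding EE2 by simp
    show ?thesis unfolding B[symmetric] by (rule A)
  qed
  have SM: "smul (2 - of_nat (card I)) (EE I g) = EE I g + EE I g - smul (of_nat (card I)) (EE I g)"
    by (rule ext) (simp add: algebra_simps)
  show ?thesis unfolding C ST1 ST2 T12 SM by (simp add: algebra_simps)
qed

lemma rx2_RR: "rx2 p = RR {..<p} ser_one"
  by (simp add: rx2_def RR_def ser_var_mulvar)
lemma ry2_RR: "ry2 p q = RR {p..<p+q} ser_one"
  by (simp add: ry2_def RR_def ser_var_mulvar)

lemma ser_mult_RR: "good f \<Longrightarrow> ser_mult (RR I ser_one) f = RR I f"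
  by (simp add: RR_def ser_mult_sum1 mulvar_ser_mult[symmetric] ser_mult_one)

lemma Lop_RR_one_in: "finite I \<Longrightarrow> a \<in> I \<Longrightarrow> b \<in> I \<Longrightarrow> Lop a b (RR I ser_one) = 0"
  by (simp add: Lop_def dvar_RR dvar_ser_one mulvar_comm)

lemma Lop_RR_one_out: "finite I \<Longrightarrow> a \<notin> I \<Longrightarrow> b \<notin> I \<Longrightarrow> Lop a b (RR I ser_one) = 0"
  by (simp add: Lop_def dvar_RR dvar_ser_one)

lemma dvar_harm_y: "harm_y p q l h \<Longrightarrow> b < p \<Longrightarrow> dvar b h = 0"
proof (rule ext)
  fix \<alpha> assume h: "harm_y p q l h" and b: "b < p"
  have "h (\<alpha>(b := Suc (\<alpha> b))) = 0"
  proof (rule ccontr)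
    assume "h (\<alpha>(b := Suc (\<alpha> b))) \<noteq> 0"
    then have "(\<alpha>(b := Suc (\<alpha> b))) b = 0" using h b unfolding harm_y_def by blast
    then show False by simp
  qed
  then show "dvar b h \<alpha> = 0 \<alpha>" by (simp add: dvar_def)
qed

lemma dvar_harm_x: "harm_x p k h \<Longrightarrow> p \<le> b \<Longrightarrow> dvar b h = 0"
proof (rule ext)
  fix \<alpha> assume h: "harm_x p k h" and b: "p \<le> b"
  have "h (\<alpha>(b := Suc (\<alpha> b))) = 0"
  proof (rule ccontr)
    assume "h (\<alpha>(b := Suc (\<alpha> b))) \<noteq> 0"
    then have "(\<alpha>(b := Suc (\<alpha> b))) b = 0" using h b unfolding harm_x_def by blast
    then show False by simp
  qed
  then show "dvar b h \<alpha> = 0 \<alpha>" by (simp add: dvar_def)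
qed

lemma Lop_dvar0: "dvar a h = 0 \<Longrightarrow> dvar b h = 0 \<Longrightarrow> Lop a b h = 0"
  by (simp add: Lop_def)

lemma Lop_elem_x:
  assumes "a < p" "b < p" "a \<noteq> b" "harm_y p q l h2"
  shows "Lop a b (elem p q h1 h2 c) = elem p q (Lop a b h1) h2 c"
proof -
  have 1: "Lop a b h2 = 0" using assms by (simp add: Lop_dvar0 dvar_harm_y)
  have 2: "Lop a b (subst2 (p + q) c (rx2 p) (ry2 p q)) = 0"
    using assms by (intro Lop_subst2) (simp_all add: rx2_RR ry2_RR Lop_RR_one_in Lop_RR_one_out)
  show ?thesis unfolding elem_def by (simp add: Lop_ser_mult 1 2)
qed

lemma Lop_elem_y:
  assumes "p \<le> a" "a < p + q" "p \<le> b" "b < p + q" "a \<noteq> b" "harm_x p k h1"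
  shows "Lop a b (elem p q h1 h2 c) = elem p q h1 (Lop a b h2) c"
proof -
  have 1: "Lop a b h1 = 0" using assms by (simp add: Lop_dvar0 dvar_harm_x)
  have 2: "Lop a b (subst2 (p + q) c (rx2 p) (ry2 p q)) = 0"
    using assms by (intro Lop_subst2) (simp_all add: rx2_RR ry2_RR Lop_RR_one_in Lop_RR_one_out)
  show ?thesis unfolding elem_def by (simp add: Lop_ser_mult 1 2)
qed

lemma elem_sum1: "elem p q (\<Sum>j\<in>A. F j) h2 c = (\<Sum>j\<in>A. elem p q (F j) h2 c)"
  by (simp add: elem_def ser_mult_sum1)
lemma elem_sum2: "elem p q h1 (\<Sum>j\<in>A. F j) c = (\<Sum>j\<in>A. elem p q h1 (F j) c)"
  by (simp add: elem_def ser_mult_sum1 ser_mult_sum2)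
lemma elem_smul1: "elem p q (smul d h1) h2 c = smul d (elem p q h1 h2 c)"
  by (simp add: elem_def ser_mult_smul1)
lemma elem_smul2: "elem p q h1 (smul d h2) c = smul d (elem p q h1 h2 c)"
  by (simp add: elem_def ser_mult_smul1 ser_mult_smul2)

lemma CasI_elem_x:
  assumes "harm_y p q l h2"
  shows "CasI {..<p} (elem p q h1 h2 c) = elem p q (CasI {..<p} h1) h2 c"
proof -
  have "CasI {..<p} (elem p q h1 h2 c) = (\<Sum>a\<in>{..<p}. \<Sum>b\<in>{b\<in>{..<p}. a < b}. elem p q (Lop a b (Lop a b h1)) h2 c)"
    unfolding CasI_def
    by (intro sum.cong refl) (simp add: Lop_elem_x[OF _ _ _ assms])
  also have "\<dots> = elem p q (CasI {..<p} h1) h2 c"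
    unfolding CasI_def elem_sum1 ..
  finally show ?thesis .
qed

lemma CasI_elem_y:
  assumes "harm_x p k h1"
  shows "CasI {p..<p+q} (elem p q h1 h2 c) = elem p q h1 (CasI {p..<p+q} h2) c"
proof -
  have "CasI {p..<p+q} (elem p q h1 h2 c) = (\<Sum>a\<in>{p..<p+q}. \<Sum>b\<in>{b\<in>{p..<p+q}. a < b}. elem p q h1 (Lop a b (Lop a b h2)) c)"
    unfolding CasI_def
    by (intro sum.cong refl) (simp add: Lop_elem_y[OF _ _ _ _ _ assms])
  also have "\<dots> = elem p q h1 (CasI {p..<p+q} h2) c"
    unfolding CasI_def elem_sum2 ..
  finally show ?thesis .
qed

lemma EE_apply: "EE I h \<alpha> = of_nat (\<Sum>i\<in>I. \<alpha> i) * h \<alpha>"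
proof -
  have "mulvar i (dvar i h) \<alpha> = of_nat (\<alpha> i) * h \<alpha>" for i
  proof (cases "\<alpha> i")
    case (Suc n)
    then have e: "\<alpha>(i := Suc n) = \<alpha>" by (rule fun_upd_idem)
    show ?thesis using Suc by (simp add: mulvar_def dvar_def e)
  qed (simp add: mulvar_def)
  then show ?thesis by (simp add: EE_def sum_ser_apply sum_distrib_right)
qed

lemma EE_harm_x: "harm_x p k h \<Longrightarrow> EE {..<p} h = smul (of_nat k) h"
proof (rule ext)
  fix \<alpha> assume h: "harm_x p k h"
  show "EE {..<p} h \<alpha> = smul (of_nat k) h \<alpha>"
  proof (cases "h \<alpha> = 0")
    case False
    then have "(\<Sum>i<p. \<alpha> i) = k" using h unfolding harm_x_def by blast
    then show ?thesis by (simp add: EE_apply)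
  qed (simp add: EE_apply)
qed

lemma EE_harm_y: "harm_y p q l h \<Longrightarrow> EE {p..<p+q} h = smul (of_nat l) h"
proof (rule ext)
  fix \<alpha> assume h: "harm_y p q l h"
  show "EE {p..<p+q} h \<alpha> = smul (of_nat l) h \<alpha>"
  proof (cases "h \<alpha> = 0")
    case False
    then have "(\<Sum>i\<in>{p..<p+q}. \<alpha> i) = l" using h unfolding harm_y_def by blast
    then show ?thesis by (simp add: EE_apply)
  qed (simp add: EE_apply)
qed

lemma CasI_harm_x: "harm_x p k h \<Longrightarrow> CasI {..<p} h = smul (- (of_nat k * (of_nat k + of_nat p - 2))) h"
proof -
  assume h: "harm_x p k h"
  have L: "LL {..<p} h = 0" using h by (simp add: harm_x_def Lap_x_def LL_def)
  show ?thesis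
    by (rule ext) (simp add: CasI_formula L EE_harm_x[OF h] algebra_simps)
qed

lemma CasI_harm_y: "harm_y p q l h \<Longrightarrow> CasI {p..<p+q} h = smul (- (of_nat l * (of_nat l + of_nat q - 2))) h"
proof -
  assume h: "harm_y p q l h"
  have L: "LL {p..<p+q} h = 0" using h by (simp add: harm_y_def Lap_y_def LL_def)
  show ?thesis
    by (rule ext) (simp add: CasI_formula L EE_harm_y[OF h] algebra_simps)
qed

lemma smul_sum_const: "(\<Sum>b\<in>I. F) = smul (of_nat (card I)) F" by (rule sum_const_smul)

lemma LL_RR_same:
  assumes fin: "finite I"
  shows "LL I (RR I g) = RR I (LL I g) + smul 4 (EE I g) + smul (2 * of_nat (card I)) g"
proof -
  have "LL I (RR I g) = (\<Sum>b\<in>I. RR I (dvar b (dvar b g)) + (smul 4 (mulvar b (dvar b g)) + smul 2 g))"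
    unfolding LL_def
  proof (rule sum.cong[OF refl])
    fix b assume b: "b \<in> I"
    show "dvar b (dvar b (RR I g)) = RR I (dvar b (dvar b g)) + (smul 4 (mulvar b (dvar b g)) + smul 2 g)"
      using fin b
      by (simp add: dvar_RR dvar_mulvar) (rule ext, simp add: algebra_simps)
  qed
  also have "\<dots> = RR I (LL I g) + (EE I (smul 4 g) + smul (of_nat (card I)) (smul 2 g))"
    by (simp only: sum.distrib RR_sum LL_def EE_def sum_const_smul mulvar_smul dvar_smul)
  also have "\<dots> = RR I (LL I g) + smul 4 (EE I g) + smul (2 * of_nat (card I)) g"
    by (simp add: algebra_simps mult.commute)
  finally show ?thesis .
qed

lemma LL_RR_disj:
  assumes fin: "finite J" and dj: "I \<inter> J = {}"
  shows "LL I (RR J g) = RR J (LL I g)"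
proof -
  have "LL I (RR J g) = (\<Sum>b\<in>I. RR J (dvar b (dvar b g)))"
    unfolding LL_def
  proof (rule sum.cong[OF refl])
    fix b assume b: "b \<in> I"
    then have "b \<notin> J" using dj by blast
    then show "dvar b (dvar b (RR J g)) = RR J (dvar b (dvar b g))"
      using fin by (simp add: dvar_RR)
  qed
  also have "\<dots> = RR J (LL I g)" by (simp add: RR_sum LL_def)
  finally show ?thesis .
qed

lemma RR_comm: "RR I (RR J g) = RR J (RR I g)"
proof -
  have "RR I (RR J g) = (\<Sum>i\<in>I. \<Sum>j\<in>J. mulvar j (mulvar j (mulvar i (mulvar i g))))"
    unfolding RR_def mulvar_sum by (intro sum.cong refl) (metis mulvar_comm)
  also have "\<dots> = RR J (RR I g)" unfolding RR_def mulvar_sum by (rule sum.swap)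
  finally show ?thesis .
qed

lemma LL_comm: "LL I (LL J g) = LL J (LL I g)"
proof -
  have "LL I (LL J g) = (\<Sum>i\<in>I. \<Sum>j\<in>J. dvar j (dvar j (dvar i (dvar i g))))"
    unfolding LL_def dvar_sum by (intro sum.cong refl) (metis dvar_comm)
  also have "\<dots> = LL J (LL I g)" unfolding LL_def dvar_sum by (rule sum.swap)
  finally show ?thesis .
qed

lemma EE_comm:
  assumes dj: "I \<inter> J = {}"
  shows "EE I (EE J g) = EE J (EE I g)"
proof -
  have "EE I (EE J g) = (\<Sum>i\<in>I. \<Sum>j\<in>J. mulvar j (dvar j (mulvar i (dvar i g))))"
    unfolding EE_def mulvar_sum dvar_sum
  proof (intro sum.cong refl)
    fix i j assume "i \<in> I" "j \<in> J"
    then have ij: "i \<noteq> j" "j \<noteq> i" using dj by auto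
    show "mulvar i (dvar i (mulvar j (dvar j g))) = mulvar j (dvar j (mulvar i (dvar i g)))"
      using ij by (simp add: dvar_mulvar_ne mulvar_comm[of i j] dvar_comm[of i j])
  qed
  also have "\<dots> = EE J (EE I g)" unfolding EE_def mulvar_sum dvar_sum by (rule sum.swap)
  finally show ?thesis .
qed

definition Yop :: "nat \<Rightarrow> nat \<Rightarrow> ser \<Rightarrow> ser" where
  "Yop i j h = mulvar i (mulvar j h) + dvar i (dvar j h)"

definition Mix :: "nat set \<Rightarrow> nat set \<Rightarrow> ser \<Rightarrow> ser" where
  "Mix I J g = (\<Sum>i\<in>I. \<Sum>j\<in>J. Yop i j (Yop i j g))"

lemma Yop_smul: "Yop i j (smul c h) = smul c (Yop i j h)" by (simp add: Yop_def)

lemma Mix_formula: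
  assumes finI: "finite I" and finJ: "finite J" and dj: "I \<inter> J = {}"
  shows "Mix I J g = RR I (RR J g) + LL I (LL J g) + smul 2 (EE I (EE J g))
     + smul (of_nat (card J)) (EE I g) + smul (of_nat (card I)) (EE J g)
     + smul (of_nat (card I) * of_nat (card J)) g"
proof -
  have "Mix I J g = (\<Sum>i\<in>I. \<Sum>j\<in>J. mulvar i (mulvar i (mulvar j (mulvar j g))) + dvar i (dvar i (dvar j (dvar j g)))
          + smul 2 (mulvar i (dvar i (mulvar j (dvar j g)))) + mulvar i (dvar i g) + mulvar j (dvar j g) + g)"
    unfolding Mix_def
  proof (intro sum.cong refl)
    fix i j assume "i \<in> I" "j \<in> J"
    then have ij: "i \<noteq> j" "j \<noteq> i" using dj by auto
    have a: "mulvar i (mulvar j (mulvar i (mulvar j g))) = mulvar i (mulvar i (mulvar j (mulvar j g)))"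
      by (subst mulvar_comm[of j i]) (rule refl)
    have b: "dvar i (dvar j (dvar i (dvar j g))) = dvar i (dvar i (dvar j (dvar j g)))"
      by (subst dvar_comm[of j i]) (rule refl)
    have c: "mulvar i (mulvar j (dvar i (dvar j g))) = mulvar i (dvar i (mulvar j (dvar j g)))"
      using ij by (simp add: dvar_mulvar_ne)
    have d: "dvar i (dvar j (mulvar i (mulvar j g))) = mulvar i (dvar i (mulvar j (dvar j g))) + mulvar i (dvar i g) + mulvar j (dvar j g) + g"
    proof -
      have "dvar j (mulvar i (mulvar j g)) = mulvar i (dvar j (mulvar j g))"
        using ij by (simp add: dvar_mulvar_ne)
      also have "\<dots> = mulvar i (mulvar j (dvar j g) + g)"
        by (simp only: dvar_mulvar_eq)
      finally have "dvar j (mulvar i (mulvar j g)) = mulvar i (mulvar j (dvar j g) + g)" .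
      then have "dvar i (dvar j (mulvar i (mulvar j g))) = dvar i (mulvar i (mulvar j (dvar j g) + g))" by simp
      also have "\<dots> = mulvar i (dvar i (mulvar j (dvar j g) + g)) + (mulvar j (dvar j g) + g)"
        by (rule dvar_mulvar_eq)
      also have "\<dots> = mulvar i (dvar i (mulvar j (dvar j g))) + mulvar i (dvar i g) + mulvar j (dvar j g) + g"
        by (simp only: mulvar_add dvar_add add.assoc)
      finally show ?thesis .
    qed
    show "Yop i j (Yop i j g) = mulvar i (mulvar i (mulvar j (mulvar j g))) + dvar i (dvar i (dvar j (dvar j g)))
          + smul 2 (mulvar i (dvar i (mulvar j (dvar j g)))) + mulvar i (dvar i g) + mulvar j (dvar j g) + g"
      unfolding Yop_def mulvar_add dvar_add a b c d smul_two by (simp only: add.assoc add.commute add.left_commute)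
  qed
  also have "\<dots> = RR I (RR J g) + LL I (LL J g) + smul 2 (EE I (EE J g))
     + (\<Sum>j\<in>J. EE I g) + (\<Sum>i\<in>I. EE J g) + (\<Sum>i\<in>I. \<Sum>j\<in>J. g)"
  proof -
    have e1: "(\<Sum>i\<in>I. \<Sum>j\<in>J. mulvar i (mulvar i (mulvar j (mulvar j g)))) = RR I (RR J g)"
      by (simp only: RR_def mulvar_sum)
    have e2: "(\<Sum>i\<in>I. \<Sum>j\<in>J. dvar i (dvar i (dvar j (dvar j g)))) = LL I (LL J g)"
      by (simp only: LL_def dvar_sum)
    have e3: "(\<Sum>i\<in>I. \<Sum>j\<in>J. smul 2 (mulvar i (dvar i (mulvar j (dvar j g))))) = smul 2 (EE I (EE J g))"
      by (simp only: EE_def mulvar_sum dvar_sum smul_sum)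
    have e4: "(\<Sum>i\<in>I. \<Sum>j\<in>J. mulvar i (dvar i g)) = (\<Sum>j\<in>J. EE I g)"
      unfolding EE_def by (rule sum.swap)
    have e5: "(\<Sum>i\<in>I. \<Sum>j\<in>J. mulvar j (dvar j g)) = (\<Sum>i\<in>I. EE J g)"
      unfolding EE_def by (rule refl)
    show ?thesis
      by (simp only: sum.distrib e1 e2 e3 e4 e5)
  qed
  also have "\<dots> = RR I (RR J g) + LL I (LL J g) + smul 2 (EE I (EE J g))
     + smul (of_nat (card J)) (EE I g) + smul (of_nat (card I)) (EE J g)
     + smul (of_nat (card I) * of_nat (card J)) g"
    by (simp only: sum_const_smul smul_smul)
  finally show ?thesis .
qed

lemma M_prod_ne:
  assumes "a < b" "c < d" "\<not> (c = a \<and> d = b)"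
  shows "Mmat t k a b * Mmat k t c d = 0" "Mmat k t a b * Mmat t k c d = 0"
  using assms by (auto simp: Mmat_def)

lemma M_prod_eq:
  assumes "a < b"
  shows "Mmat t k a b * Mmat k t a b = (if k = b \<and> t = a then -1 else 0) + (if k = a \<and> t = b then -1 else 0)"
    "Mmat k t a b * Mmat t k a b = (if k = b \<and> t = a then -1 else 0) + (if k = a \<and> t = b then -1 else 0)"
  using assms by (auto simp: Mmat_def)

lemma sum_if_eq: "finite A \<Longrightarrow> (\<Sum>k\<in>A. if k = x \<and> P then (v::complex) else 0) = (if x \<in> A \<and> P then v else 0)"
  by (cases P) simp_all

definition ind :: "bool \<Rightarrow> complex" where "ind P = (if P then 1 else 0)"

lemma M_sum_eq:
  assumes "a < b" "b < n"
  shows "(\<Sum>k<n. tp (Mmat t k) (Mmat k t) a b a b) = - (ind (t = a) + ind (t = b))"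
    "(\<Sum>k<n. tp (Mmat k t) (Mmat t k) a b a b) = - (ind (t = a) + ind (t = b))"
proof -
  have "(\<Sum>k<n. (if k = b \<and> t = a then -1 else 0) + (if k = a \<and> t = b then -1 else (0::complex)))
     = (if b \<in> {..<n} \<and> t = a then -1 else 0) + (if a \<in> {..<n} \<and> t = b then -1 else 0)"
    by (simp only: sum.distrib sum_if_eq[OF finite_lessThan])
  also have "\<dots> = - (ind (t = a) + ind (t = b))" using assms by (simp add: ind_def)
  finally have *: "(\<Sum>k<n. (if k = b \<and> t = a then -1 else 0) + (if k = a \<and> t = b then -1 else (0::complex))) = - (ind (t = a) + ind (t = b))" .
  show "(\<Sum>k<n. tp (Mmat t k) (Mmat k t) a b a b) = - (ind (t = a) + ind (t = b))"
    unfolding tp_def M_prod_eq[OF assms(1)] by (rule *)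
  show "(\<Sum>k<n. tp (Mmat k t) (Mmat t k) a b a b) = - (ind (t = a) + ind (t = b))"
  proof -
    have "(\<Sum>k<n. tp (Mmat k t) (Mmat t k) a b a b) = (\<Sum>k<n. tp (Mmat t k) (Mmat k t) a b a b)"
      unfolding tp_def by (rule sum.cong[OF refl]) (rule mult.commute)
    also have "\<dots> = - (ind (t = a) + ind (t = b))"
      unfolding tp_def M_prod_eq(1)[OF assms(1)] by (rule *)
    finally show ?thesis .
  qed
qed

lemma M_sum_ne:
  assumes "a < b" "c < d" "\<not> (c = a \<and> d = b)"
  shows "(\<Sum>k<n. tp (Mmat t k) (Mmat k t) a b c d) = 0"
    "(\<Sum>k<n. tp (Mmat k t) (Mmat t k) a b c d) = 0"
  unfolding tp_def M_prod_ne[OF assms] by simp_all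

lemma sum_ind_lt: "(\<Sum>t<(p::nat). ind (t = a)) = ind (a < p)"
  by (simp add: ind_def)
lemma sum_ind_ivl: "(\<Sum>t\<in>{(p::nat)..<n}. ind (t = a)) = ind (p \<le> a \<and> a < n)"
  by (simp add: ind_def)

lemma Q_eq:
  assumes "a < b" "b < n"
  shows "Qnat n a b a b = -2"
proof -
  have "Qnat n a b a b = (\<Sum>t<n. \<Sum>k<n. tp (Mmat t k) (Mmat k t) a b a b)"
    unfolding Qnat_def by (simp add: sum_ser_apply)
  also have "\<dots> = (\<Sum>t<n. - (ind (t = a) + ind (t = b)))"
    using M_sum_eq[OF assms] by simp
  also have "\<dots> = - (ind (a < n) + ind (b < n))"
    by (simp only: sum_negf sum.distrib sum_ind_lt)
  also have "\<dots> = -2" using assms by (simp add: ind_def)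
  finally show ?thesis .
qed

lemma Q_ne:
  assumes "a < b" "c < d" "\<not> (c = a \<and> d = b)"
  shows "Qnat n a b c d = 0"
proof -
  have "Qnat n a b c d = (\<Sum>t<n. \<Sum>k<n. tp (Mmat t k) (Mmat k t) a b c d)"
    unfolding Qnat_def by (simp add: sum_ser_apply)
  also have "\<dots> = 0" using M_sum_ne[OF assms] by simp
  finally show ?thesis .
qed

lemma S_eq:
  assumes "a < b" "b < n"
  shows "Snat n t t a b a b = - (ind (t = a) + ind (t = b)) + 2 / of_nat n"
proof -
  have "Snat n t t a b a b = (1/2) * ((\<Sum>k<n. tp (Mmat t k) (Mmat k t) a b a b) + (\<Sum>k<n. tp (Mmat k t) (Mmat t k) a b a b))
      - (1 / of_nat n) * Qnat n a b a b"
    unfolding Snat_def by (simp add: sum.distrib)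
  also have "\<dots> = - (ind (t = a) + ind (t = b)) + 2 / of_nat n"
    unfolding M_sum_eq[OF assms] Q_eq[OF assms] by simp
  finally show ?thesis .
qed

lemma S_ne:
  assumes "a < b" "c < d" "\<not> (c = a \<and> d = b)"
  shows "Snat n t t a b c d = 0"
proof -
  have "Snat n t t a b c d = (1/2) * ((\<Sum>k<n. tp (Mmat t k) (Mmat k t) a b c d) + (\<Sum>k<n. tp (Mmat k t) (Mmat t k) a b c d))
      - (1 / of_nat n) * Qnat n a b c d"
    unfolding Snat_def by (simp add: sum.distrib)
  also have "\<dots> = 0"
    unfolding M_sum_ne[OF assms] Q_ne[OF assms] by simp
  finally show ?thesis .
qed

definition rr :: "nat \<Rightarrow> nat \<Rightarrow> complex" where
  "rr p q = (of_nat p - of_nat q) / of_nat (p + q)"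

definition W :: "nat \<Rightarrow> nat \<Rightarrow> nat \<Rightarrow> nat \<Rightarrow> complex" where
  "W p q a b = (if b < p then rr p q - 1 else if p \<le> a then 1 + rr p q else - rr p q)"

lemma Xi_ne:
  assumes "a < b" "c < d" "\<not> (c = a \<and> d = b)"
  shows "Xi p q a b c d = 0"
  unfolding Xi_def Phi_inv_tens_def S_ne[OF assms] by simp

lemma Xi_eq:
  assumes "a < b" "b < p + q"
  shows "Xi p q a b a b = W p q a b"
proof -
  let ?n = "p + q"
  have pq: "p + q \<noteq> 0" using assms by linarith
  have n0: "(of_nat ?n :: complex) \<noteq> 0" using pq by (simp only: of_nat_eq_0_iff not_False_eq_True)
  have SX: "(\<Sum>t<p. Snat ?n t t a b a b) = - (ind (a < p) + ind (b < p)) + of_nat p * (2 / of_nat ?n)"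
  proof -
    have "(\<Sum>t<p. Snat ?n t t a b a b) = (\<Sum>t<p. - (ind (t = a) + ind (t = b)) + 2 / of_nat ?n)"
      using S_eq[OF assms] by simp
    also have "\<dots> = - (ind (a < p) + ind (b < p)) + of_nat p * (2 / of_nat ?n)"
      by (simp only: sum.distrib sum_negf sum_ind_lt sum_constant card_lessThan)
    finally show ?thesis .
  qed
  have SY: "(\<Sum>t\<in>{p..<p+q}. Snat ?n t t a b a b) = - (ind (p \<le> a \<and> a < p + q) + ind (p \<le> b \<and> b < p + q)) + of_nat q * (2 / of_nat ?n)"
  proof -
    have "(\<Sum>t\<in>{p..<p+q}. Snat ?n t t a b a b) = (\<Sum>t\<in>{p..<p+q}. - (ind (t = a) + ind (t = b)) + 2 / of_nat ?n)"
      using S_eq[OF assms] by simp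
    also have "\<dots> = - (ind (p \<le> a \<and> a < p + q) + ind (p \<le> b \<and> b < p + q)) + of_nat (card {p..<p+q}) * (2 / of_nat ?n)"
      by (simp only: sum.distrib sum_negf sum_ind_ivl sum_constant)
    finally show ?thesis by simp
  qed
  have tot: "(1/2) * ((\<Sum>t<p. Snat ?n t t a b a b) - (\<Sum>t\<in>{p..<p+q}. Snat ?n t t a b a b))
     = (if b < p then rr p q - 1 else if p \<le> a then 1 + rr p q else rr p q)"
  proof -
    define N where "N = (of_nat ?n :: complex)"
    have N0: "N \<noteq> 0" using n0 by (simp add: N_def)
    have rN: "rr p q = (of_nat p - of_nat q) / N" by (simp add: rr_def N_def)
    show ?thesis unfolding SX SY rN N_def[symmetric] using assms N0
      by (auto simp: field_simps ind_def)
  qed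
  have ph: "sq p b / sq p a * (sq p b / sq p a) = (if a < p \<and> p \<le> b then -1 else 1)"
    using assms by (auto simp: sq_def)
  have "Xi p q a b a b = sq p b / sq p a * (sq p b / sq p a) *
      ((1/2) * ((\<Sum>t<p. Snat ?n t t a b a b) - (\<Sum>t\<in>{p..<p+q}. Snat ?n t t a b a b)))"
    unfolding Xi_def Phi_inv_tens_def by simp
  also have "\<dots> = W p q a b"
    unfolding tot ph W_def using assms by auto
  finally show ?thesis .
qed

lemma sum_if_eq2: "finite A \<Longrightarrow> (\<Sum>k\<in>A. if k = x \<and> P then v else 0) = (if x \<in> A \<and> P then v else (0::'a::comm_monoid_add))"
  by (cases P) simp_all

lemma eps_sq: "eps p j * eps p j = 1" by (simp add: eps_def)

lemma inner_collapse:
  assumes "i < j" "j < p + q"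
  shows "(\<Sum>k<p+q. \<Sum>l\<in>{k<..<p+q}. smul (eps p j * eps p l * Xi p q i j k l) (pi_X p i j (pi_X p k l f)))
       = smul (W p q i j) (pi_X p i j (pi_X p i j f))"
proof -
  let ?G = "smul (W p q i j) (pi_X p i j (pi_X p i j f))"
  have "(\<Sum>k<p+q. \<Sum>l\<in>{k<..<p+q}. smul (eps p j * eps p l * Xi p q i j k l) (pi_X p i j (pi_X p k l f)))
      = (\<Sum>k<p+q. \<Sum>l\<in>{k<..<p+q}. if l = j \<and> k = i then ?G else 0)"
  proof (intro sum.cong refl)
    fix k l assume k: "k \<in> {..<p+q}" and l: "l \<in> {k<..<p+q}"
    show "smul (eps p j * eps p l * Xi p q i j k l) (pi_X p i j (pi_X p k l f)) = (if l = j \<and> k = i then ?G else 0)"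
    proof (cases "k = i \<and> l = j")
      case True
      then show ?thesis using Xi_eq[OF assms] eps_sq[of p j] by auto
    next
      case False
      have "Xi p q i j k l = 0" using Xi_ne[OF assms(1), of k l] l False by auto
      then show ?thesis using False by auto
    qed
  qed
  also have "\<dots> = (\<Sum>k<p+q. if k = i then ?G else 0)"
  proof (rule sum.cong[OF refl])
    fix k assume "k \<in> {..<p+q}"
    show "(\<Sum>l\<in>{k<..<p+q}. if l = j \<and> k = i then ?G else 0) = (if k = i then ?G else 0)"
      unfolding sum_if_eq2[OF finite_greaterThanLessThan] using assms by auto
  qed
  also have "\<dots> = ?G" using assms by simp
  finally show ?thesis .
qed

lemma Xihat_reduce:
  "Xihat p q f = (\<Sum>i<p+q. \<Sum>j\<in>{i<..<p+q}. smul (W p q i j) (pi_X p i j (pi_X p i j f)))"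
  unfolding Xihat_def pi_gamma2_def
  by (intro sum.cong refl) (simp add: inner_collapse)

lemma split3:
  fixes G :: "nat \<Rightarrow> nat \<Rightarrow> 'a::comm_monoid_add"
  shows "(\<Sum>i<p+q. \<Sum>j\<in>{i<..<p+q}. G i j) =
    (\<Sum>i<p. \<Sum>j\<in>{j\<in>{..<p}. i < j}. G i j) + (\<Sum>i\<in>{p..<p+q}. \<Sum>j\<in>{j\<in>{p..<p+q}. i < j}. G i j)
    + (\<Sum>i<p. \<Sum>j\<in>{p..<p+q}. G i j)"
proof -
  have U: "{..<p+q} = {..<p} \<union> {p..<p+q}" by auto
  have "(\<Sum>i<p+q. \<Sum>j\<in>{i<..<p+q}. G i j) = (\<Sum>i<p. \<Sum>j\<in>{i<..<p+q}. G i j) + (\<Sum>i\<in>{p..<p+q}. \<Sum>j\<in>{i<..<p+q}. G i j)"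
    unfolding U by (rule sum.union_disjoint) auto
  also have "(\<Sum>i<p. \<Sum>j\<in>{i<..<p+q}. G i j) = (\<Sum>i<p. (\<Sum>j\<in>{j\<in>{..<p}. i < j}. G i j) + (\<Sum>j\<in>{p..<p+q}. G i j))"
  proof (rule sum.cong[OF refl])
    fix i assume "i \<in> {..<p}"
    then have "{i<..<p+q} = {j\<in>{..<p}. i < j} \<union> {p..<p+q}" by auto
    then show "(\<Sum>j\<in>{i<..<p+q}. G i j) = (\<Sum>j\<in>{j\<in>{..<p}. i < j}. G i j) + (\<Sum>j\<in>{p..<p+q}. G i j)"
      by (simp only:) (rule sum.union_disjoint, auto)
  qed
  also have "(\<Sum>i\<in>{p..<p+q}. \<Sum>j\<in>{i<..<p+q}. G i j) = (\<Sum>i\<in>{p..<p+q}. \<Sum>j\<in>{j\<in>{p..<p+q}. i < j}. G i j)"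
  proof (rule sum.cong[OF refl])
    fix i assume "i \<in> {p..<p+q}"
    then have "{i<..<p+q} = {j\<in>{p..<p+q}. i < j}" by auto
    then show "(\<Sum>j\<in>{i<..<p+q}. G i j) = (\<Sum>j\<in>{j\<in>{p..<p+q}. i < j}. G i j)" by simp
  qed
  finally show ?thesis by (simp add: sum.distrib algebra_simps)
qed

lemma Lop_uminus: "Lop a b (- f) = - Lop a b f" by (simp add: Lop_def)

lemma Xihat_formula:
  "Xihat p q f = smul (rr p q - 1) (CasI {..<p} f) + smul (1 + rr p q) (CasI {p..<p+q} f)
      + smul (rr p q) (Mix {..<p} {p..<p+q} f)"
proof -
  let ?G = "\<lambda>i j. smul (W p q i j) (pi_X p i j (pi_X p i j f))"
  have X: "(\<Sum>i<p. \<Sum>j\<in>{j\<in>{..<p}. i < j}. ?G i j) = smul (rr p q - 1) (CasI {..<p} f)"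
    unfolding CasI_def smul_sum
    by (intro sum.cong refl) (auto simp: W_def pi_X_def Lop_def)
  have Y: "(\<Sum>i\<in>{p..<p+q}. \<Sum>j\<in>{j\<in>{p..<p+q}. i < j}. ?G i j) = smul (1 + rr p q) (CasI {p..<p+q} f)"
    unfolding CasI_def smul_sum
  proof (intro sum.cong refl)
    fix i j assume "i \<in> {p..<p+q}" "j \<in> {j\<in>{p..<p+q}. i < j}"
    then have ij: "p \<le> i" "p \<le> j" "\<not> j < p" by auto
    have "pi_X p i j g = - Lop i j g" for g using ij by (simp add: pi_X_def Lop_def)
    then show "?G i j = smul (1 + rr p q) (Lop i j (Lop i j f))"
      using ij by (simp add: W_def Lop_uminus)
  qed
  have M: "(\<Sum>i<p. \<Sum>j\<in>{p..<p+q}. ?G i j) = smul (rr p q) (Mix {..<p} {p..<p+q} f)"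
    unfolding Mix_def smul_sum
  proof (intro sum.cong refl)
    fix i j assume "i \<in> {..<p}" "j \<in> {p..<p+q}"
    then have ij: "i < p" "p \<le> j" "\<not> j < p" "\<not> p \<le> i" by auto
    have "pi_X p i j g = smul (- \<i>) (Yop i j g)" for g using ij by (simp add: pi_X_def Yop_def)
    then show "?G i j = smul (rr p q) (Yop i j (Yop i j f))"
      using ij by (simp add: W_def Yop_smul)
  qed
  show ?thesis unfolding Xihat_reduce split3 X Y M ..
qed

lemma RR_uminus: "RR I (- f) = - RR I f" by (simp add: RR_def sum_negf)
lemma LL_uminus: "LL I (- f) = - LL I f" by (simp add: LL_def sum_negf)

lemma good_elem: "good (elem p q h1 h2 c)" by (simp add: elem_def good_ser_mult)

lemma Khom_facts:
  assumes "K_homog p q kp km f"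
  obtains k l where "real k + real p / 2 = kp" "real l + real q / 2 = km" "good f"
    "CasI {..<p} f = smul (- (of_nat k * (of_nat k + of_nat p - 2))) f"
    "CasI {p..<p+q} f = smul (- (of_nat l * (of_nat l + of_nat q - 2))) f"
proof -
  from assms obtain k l N h1 h2 c where kk: "real k + real p / 2 = kp" "real l + real q / 2 = km"
    and f: "f = (\<Sum>i<(N::nat). elem p q (h1 i) (h2 i) (c i))"
    and h: "\<forall>i<N. harm_x p k (h1 i) \<and> harm_y p q l (h2 i)"
    unfolding K_homog_def by blast
  have g: "good f" unfolding f by (rule good_sum) (rule good_elem)
  have cx: "CasI {..<p} f = smul (- (of_nat k * (of_nat k + of_nat p - 2))) f"
    unfolding f CasI_sum smul_sum
  proof (rule sum.cong[OF refl])
    fix i assume "i \<in> {..<N}"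
    then have hx: "harm_x p k (h1 i)" and hy: "harm_y p q l (h2 i)" using h by auto
    show "CasI {..<p} (elem p q (h1 i) (h2 i) (c i)) = smul (- (of_nat k * (of_nat k + of_nat p - 2))) (elem p q (h1 i) (h2 i) (c i))"
      unfolding CasI_elem_x[OF hy] CasI_harm_x[OF hx] elem_smul1 ..
  qed
  have cy: "CasI {p..<p+q} f = smul (- (of_nat l * (of_nat l + of_nat q - 2))) f"
    unfolding f CasI_sum smul_sum
  proof (rule sum.cong[OF refl])
    fix i assume "i \<in> {..<N}"
    then have hx: "harm_x p k (h1 i)" and hy: "harm_y p q l (h2 i)" using h by auto
    show "CasI {p..<p+q} (elem p q (h1 i) (h2 i) (c i)) = smul (- (of_nat l * (of_nat l + of_nat q - 2))) (elem p q (h1 i) (h2 i) (c i))"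
      unfolding CasI_elem_y[OF hx] CasI_harm_y[OF hy] elem_smul2 ..
  qed
  show ?thesis using that kk g cx cy by blast
qed

lemma Espace_good: "f \<in> Espace p q \<Longrightarrow> good f"
  unfolding Espace_def by (auto intro!: good_sum good_elem)

lemma card_X: "card {..<p} = p" by simp
lemma card_Y: "card {p..<p+q} = q" by simp
lemma disjXY: "{..<(p::nat)} \<inter> {p..<p+q} = {}" by auto

lemma core_plus:
  fixes f :: ser and K1 K2 c :: complex
  assumes cx: "CasI {..<p} f = smul (- K1) f" and cy: "CasI {p..<p+q} f = smul (- K2) f"
    and hb: "EE {p..<p+q} f = EE {..<p} f + smul c f"
    and lx: "LL {..<p} f = - RR {p..<p+q} f"
  shows "Xihat p q f = smul (K1 - K2 + rr p q * (- c * c + (of_nat p - of_nat q - 2) * c + of_nat p * of_nat q - 2 * of_nat q)) f"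
proof
  fix \<alpha>
  let ?X = "{..<p}" and ?Y = "{p..<p+q}"
  have e1: "CasI ?X f = RR ?X (LL ?X f) - EE ?X (EE ?X f) + smul (2 - of_nat p) (EE ?X f)"
    using CasI_formula[of ?X f] by simp
  have e2: "CasI ?Y f = RR ?Y (LL ?Y f) - EE ?Y (EE ?Y f) + smul (2 - of_nat q) (EE ?Y f)"
    using CasI_formula[of ?Y f] by simp
  have e3: "Mix ?X ?Y f = RR ?X (RR ?Y f) + LL ?X (LL ?Y f) + smul 2 (EE ?X (EE ?Y f))
     + smul (of_nat q) (EE ?X f) + smul (of_nat p) (EE ?Y f) + smul (of_nat p * of_nat q) f"
    using Mix_formula[of ?X ?Y f] disjXY by simp
  have e4: "RR ?X (LL ?X f) = - RR ?X (RR ?Y f)" unfolding lx RR_uminus ..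
  have e5: "LL ?X (LL ?Y f) = - (RR ?Y (LL ?Y f) + smul 4 (EE ?Y f) + smul (2 * of_nat q) f)"
    unfolding LL_comm[of ?X ?Y] lx LL_uminus using LL_RR_same[of ?Y f] by simp
  have e7: "EE ?X (EE ?Y f) = EE ?X (EE ?X f) + smul c (EE ?X f)"
    unfolding hb by simp
  have e8: "EE ?Y (EE ?Y f) = EE ?X (EE ?Y f) + smul c (EE ?Y f)"
  proof -
    have "EE ?Y (EE ?Y f) = EE ?Y (EE ?X f + smul c f)"
      by (simp only: hb)
    also have "\<dots> = EE ?Y (EE ?X f) + smul c (EE ?Y f)" by simp
    finally have "EE ?Y (EE ?Y f) = EE ?Y (EE ?X f) + smul c (EE ?Y f)" .
    then show ?thesis using EE_comm[OF disjXY[of p q], where g = f] by simp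
  qed
  note xf = Xihat_formula[of p q f]
  have p1: "CasI ?X f \<alpha> = - K1 * f \<alpha>" using cx by simp
  have p2: "CasI ?Y f \<alpha> = - K2 * f \<alpha>" using cy by simp
  have q1: "CasI ?X f \<alpha> = RR ?X (LL ?X f) \<alpha> - EE ?X (EE ?X f) \<alpha> + (2 - of_nat p) * EE ?X f \<alpha>"
    using fun_cong[OF e1, of \<alpha>] by simp
  have q2: "CasI ?Y f \<alpha> = RR ?Y (LL ?Y f) \<alpha> - EE ?Y (EE ?Y f) \<alpha> + (2 - of_nat q) * EE ?Y f \<alpha>"
    using fun_cong[OF e2, of \<alpha>] by simp
  have q3: "Mix ?X ?Y f \<alpha> = RR ?X (RR ?Y f) \<alpha> + LL ?X (LL ?Y f) \<alpha> + 2 * EE ?X (EE ?Y f) \<alpha>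
     + of_nat q * EE ?X f \<alpha> + of_nat p * EE ?Y f \<alpha> + of_nat p * of_nat q * f \<alpha>"
    using fun_cong[OF e3, of \<alpha>] by simp
  have q4: "RR ?X (LL ?X f) \<alpha> = - RR ?X (RR ?Y f) \<alpha>" using fun_cong[OF e4, of \<alpha>] by simp
  have q5: "LL ?X (LL ?Y f) \<alpha> = - (RR ?Y (LL ?Y f) \<alpha> + 4 * EE ?Y f \<alpha> + 2 * of_nat q * f \<alpha>)"
    using fun_cong[OF e5, of \<alpha>] by simp
  have q6: "EE ?Y f \<alpha> = EE ?X f \<alpha> + c * f \<alpha>" using fun_cong[OF hb, of \<alpha>] by simp
  have q7: "EE ?X (EE ?Y f) \<alpha> = EE ?X (EE ?X f) \<alpha> + c * EE ?X f \<alpha>" using fun_cong[OF e7, of \<alpha>] by simp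
  have q8: "EE ?Y (EE ?Y f) \<alpha> = EE ?X (EE ?Y f) \<alpha> + c * EE ?Y f \<alpha>" using fun_cong[OF e8, of \<alpha>] by simp
  have qx: "Xihat p q f \<alpha> = (rr p q - 1) * CasI ?X f \<alpha> + (1 + rr p q) * CasI ?Y f \<alpha> + rr p q * Mix ?X ?Y f \<alpha>"
    using fun_cong[OF xf, of \<alpha>] by simp
  show "Xihat p q f \<alpha> = smul (K1 - K2 + rr p q * (- c * c + (of_nat p - of_nat q - 2) * c + of_nat p * of_nat q - 2 * of_nat q)) f \<alpha>"
    unfolding smul_apply
    using p1 p2 q1 q2 q3 q4 q5 q6 q7 q8 qx by algebra
qed

lemma rr_N: "p + q \<noteq> 0 \<Longrightarrow> rr p q * (of_nat p + of_nat q) = of_nat p - of_nat q"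
proof -
  assume a: "p + q \<noteq> 0"
  have n: "(of_nat (p + q) :: complex) \<noteq> 0" using a by (simp only: of_nat_eq_0_iff not_False_eq_True)
  have "rr p q * of_nat (p + q) = of_nat p - of_nat q" unfolding rr_def using n by simp
  then show ?thesis by simp
qed

lemmas ofr = of_real_diff of_real_mult of_real_add of_real_divide of_real_of_nat_eq of_real_numeral

lemma lam_plus:
  assumes "p + q \<noteq> 0"
  shows "complex_of_real ((real k + real p / 2 - (real l + real q / 2)) * (real k + real p / 2 + (real l + real q / 2) - 2)
      - (real p - real q) / real (p + q) * real m * real (m + 2))
    = of_nat k * (of_nat k + of_nat p - 2) - of_nat l * (of_nat l + of_nat q - 2)
      + rr p q * (- (of_nat m - complex_of_real ((real q - real p) / 2)) * (of_nat m - complex_of_real ((real q - real p) / 2))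
         + (of_nat p - of_nat q - 2) * (of_nat m - complex_of_real ((real q - real p) / 2)) + of_nat p * of_nat q - 2 * of_nat q)"
proof -
  let ?R = "rr p q" and ?P = "of_nat p :: complex" and ?Q = "of_nat q :: complex"
  have h: "?R * (?P + ?Q) - (?P - ?Q) = 0" using rr_N[OF assms] by simp
  have "(of_nat k * (of_nat k + of_nat p - 2) - of_nat l * (of_nat l + of_nat q - 2)
      + rr p q * (- (of_nat m - complex_of_real ((real q - real p) / 2)) * (of_nat m - complex_of_real ((real q - real p) / 2))
         + (of_nat p - of_nat q - 2) * (of_nat m - complex_of_real ((real q - real p) / 2)) + of_nat p * of_nat q - 2 * of_nat q)) - (complex_of_real ((real k + real p / 2 - (real l + real q / 2)) * (real k + real p / 2 + (real l + real q / 2) - 2)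
      - (real p - real q) / real (p + q) * real m * real (m + 2))) = (?R * (?P + ?Q) - (?P - ?Q)) * ((?P + ?Q) / 4 - 1)"
    unfolding ofr rr_def[symmetric] by (simp add: field_simps)
  then show ?thesis using h by simp
qed

lemma lam_minus:
  assumes "p + q \<noteq> 0"
  shows "complex_of_real ((real k + real p / 2 - (real l + real q / 2)) * (real k + real p / 2 + (real l + real q / 2) - 2)
      - (real p - real q) / real (p + q) * real m * real (m + 2))
    = of_nat k * (of_nat k + of_nat p - 2) - of_nat l * (of_nat l + of_nat q - 2)
      + rr p q * (- (- of_nat m - complex_of_real ((real q - real p) / 2)) * (- of_nat m - complex_of_real ((real q - real p) / 2))
         + (of_nat p - of_nat q + 2) * (- of_nat m - complex_of_real ((real q - real p) / 2)) + of_nat p * of_nat q - 2 * of_nat p)"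
proof -
  let ?R = "rr p q" and ?P = "of_nat p :: complex" and ?Q = "of_nat q :: complex"
  have h: "?R * (?P + ?Q) - (?P - ?Q) = 0" using rr_N[OF assms] by simp
  have "(of_nat k * (of_nat k + of_nat p - 2) - of_nat l * (of_nat l + of_nat q - 2)
      + rr p q * (- (- of_nat m - complex_of_real ((real q - real p) / 2)) * (- of_nat m - complex_of_real ((real q - real p) / 2))
         + (of_nat p - of_nat q + 2) * (- of_nat m - complex_of_real ((real q - real p) / 2)) + of_nat p * of_nat q - 2 * of_nat p)) - (complex_of_real ((real k + real p / 2 - (real l + real q / 2)) * (real k + real p / 2 + (real l + real q / 2) - 2)
      - (real p - real q) / real (p + q) * real m * real (m + 2))) = (?R * (?P + ?Q) - (?P - ?Q)) * ((?P + ?Q) / 4 - 1)"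
    unfolding ofr rr_def[symmetric] by (simp add: field_simps)
  then show ?thesis using h by simp
qed

lemma lam_zero:
  "complex_of_real ((real k + real p / 2 - (real l + real q / 2)) * (real k + real p / 2 + (real l + real q / 2) - 2)
      - (real p - real q) / real (p + q) * real 0 * real (0 + 2))
    = of_nat k * (of_nat k + of_nat p - 2) - of_nat l * (of_nat l + of_nat q - 2)
      + (- complex_of_real ((real q - real p) / 2)) * (- complex_of_real ((real q - real p) / 2))
      + (of_nat q - 2) * (- complex_of_real ((real q - real p) / 2))"
  unfolding ofr by (simp add: field_simps)

lemma core_minus:
  fixes f :: ser and K1 K2 c :: complex
  assumes cx: "CasI {..<p} f = smul (- K1) f" and cy: "CasI {p..<p+q} f = smul (- K2) f"
    and hb: "EE {p..<p+q} f = EE {..<p} f + smul c f"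
    and ly: "LL {p..<p+q} f = - RR {..<p} f"
  shows "Xihat p q f = smul (K1 - K2 + rr p q * (- c * c + (of_nat p - of_nat q + 2) * c + of_nat p * of_nat q - 2 * of_nat p)) f"
proof
  fix \<alpha>
  let ?X = "{..<p}" and ?Y = "{p..<p+q}"
  have e1: "CasI ?X f = RR ?X (LL ?X f) - EE ?X (EE ?X f) + smul (2 - of_nat p) (EE ?X f)"
    using CasI_formula[of ?X f] by simp
  have e2: "CasI ?Y f = RR ?Y (LL ?Y f) - EE ?Y (EE ?Y f) + smul (2 - of_nat q) (EE ?Y f)"
    using CasI_formula[of ?Y f] by simp
  have e3: "Mix ?X ?Y f = RR ?X (RR ?Y f) + LL ?X (LL ?Y f) + smul 2 (EE ?X (EE ?Y f))
     + smul (of_nat q) (EE ?X f) + smul (of_nat p) (EE ?Y f) + smul (of_nat p * of_nat q) f"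
    using Mix_formula[of ?X ?Y f] disjXY by simp
  have e4: "RR ?Y (LL ?Y f) = - RR ?X (RR ?Y f)" unfolding ly RR_uminus RR_comm[of ?Y ?X] ..
  have e5: "LL ?X (LL ?Y f) = - (RR ?X (LL ?X f) + smul 4 (EE ?X f) + smul (2 * of_nat p) f)"
    unfolding ly LL_uminus using LL_RR_same[of ?X f] by simp
  have e7: "EE ?X (EE ?Y f) = EE ?X (EE ?X f) + smul c (EE ?X f)"
    unfolding hb by simp
  have e8: "EE ?Y (EE ?Y f) = EE ?X (EE ?Y f) + smul c (EE ?Y f)"
  proof -
    have "EE ?Y (EE ?Y f) = EE ?Y (EE ?X f + smul c f)"
      by (simp only: hb)
    also have "\<dots> = EE ?Y (EE ?X f) + smul c (EE ?Y f)" by simp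
    finally have "EE ?Y (EE ?Y f) = EE ?Y (EE ?X f) + smul c (EE ?Y f)" .
    then show ?thesis using EE_comm[OF disjXY[of p q], where g = f] by simp
  qed
  note xf = Xihat_formula[of p q f]
  have p1: "CasI ?X f \<alpha> = - K1 * f \<alpha>" using cx by simp
  have p2: "CasI ?Y f \<alpha> = - K2 * f \<alpha>" using cy by simp
  have q1: "CasI ?X f \<alpha> = RR ?X (LL ?X f) \<alpha> - EE ?X (EE ?X f) \<alpha> + (2 - of_nat p) * EE ?X f \<alpha>"
    using fun_cong[OF e1, of \<alpha>] by simp
  have q2: "CasI ?Y f \<alpha> = RR ?Y (LL ?Y f) \<alpha> - EE ?Y (EE ?Y f) \<alpha> + (2 - of_nat q) * EE ?Y f \<alpha>"
    using fun_cong[OF e2, of \<alpha>] by simp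
  have q3: "Mix ?X ?Y f \<alpha> = RR ?X (RR ?Y f) \<alpha> + LL ?X (LL ?Y f) \<alpha> + 2 * EE ?X (EE ?Y f) \<alpha>
     + of_nat q * EE ?X f \<alpha> + of_nat p * EE ?Y f \<alpha> + of_nat p * of_nat q * f \<alpha>"
    using fun_cong[OF e3, of \<alpha>] by simp
  have q4: "RR ?Y (LL ?Y f) \<alpha> = - RR ?X (RR ?Y f) \<alpha>" using fun_cong[OF e4, of \<alpha>] by simp
  have q5: "LL ?X (LL ?Y f) \<alpha> = - (RR ?X (LL ?X f) \<alpha> + 4 * EE ?X f \<alpha> + 2 * of_nat p * f \<alpha>)"
    using fun_cong[OF e5, of \<alpha>] by simp
  have q6: "EE ?Y f \<alpha> = EE ?X f \<alpha> + c * f \<alpha>" using fun_cong[OF hb, of \<alpha>] by simp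
  have q7: "EE ?X (EE ?Y f) \<alpha> = EE ?X (EE ?X f) \<alpha> + c * EE ?X f \<alpha>" using fun_cong[OF e7, of \<alpha>] by simp
  have q8: "EE ?Y (EE ?Y f) \<alpha> = EE ?X (EE ?Y f) \<alpha> + c * EE ?Y f \<alpha>" using fun_cong[OF e8, of \<alpha>] by simp
  have qx: "Xihat p q f \<alpha> = (rr p q - 1) * CasI ?X f \<alpha> + (1 + rr p q) * CasI ?Y f \<alpha> + rr p q * Mix ?X ?Y f \<alpha>"
    using fun_cong[OF xf, of \<alpha>] by simp
  show "Xihat p q f \<alpha> = smul (K1 - K2 + rr p q * (- c * c + (of_nat p - of_nat q + 2) * c + of_nat p * of_nat q - 2 * of_nat p)) f \<alpha>"
    unfolding smul_apply
    using p1 p2 q1 q2 q3 q4 q5 q6 q7 q8 qx by algebra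
qed

lemma core_zero:
  fixes f :: ser and K1 K2 c :: complex
  assumes cx: "CasI {..<p} f = smul (- K1) f" and cy: "CasI {p..<p+q} f = smul (- K2) f"
    and hb: "EE {p..<p+q} f = EE {..<p} f + smul c f"
    and lx: "LL {..<p} f = - RR {p..<p+q} f"
    and ly: "LL {p..<p+q} f = - RR {..<p} f"
    and c2: "2 * c = of_nat p - of_nat q"
  shows "(K1 - K2 + c * c + (of_nat q - 2) * c) * f \<alpha> = 0"
proof -
  let ?X = "{..<p}" and ?Y = "{p..<p+q}"
  have e1: "CasI ?X f = RR ?X (LL ?X f) - EE ?X (EE ?X f) + smul (2 - of_nat p) (EE ?X f)"
    using CasI_formula[of ?X f] by simp
  have e2: "CasI ?Y f = RR ?Y (LL ?Y f) - EE ?Y (EE ?Y f) + smul (2 - of_nat q) (EE ?Y f)"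
    using CasI_formula[of ?Y f] by simp
  have e4: "RR ?Y (LL ?Y f) = - RR ?X (RR ?Y f)" unfolding ly RR_uminus RR_comm[of ?Y ?X] ..
  have e4': "RR ?X (LL ?X f) = - RR ?X (RR ?Y f)" unfolding lx RR_uminus ..
  have e7: "EE ?X (EE ?Y f) = EE ?X (EE ?X f) + smul c (EE ?X f)"
    unfolding hb by simp
  have e8: "EE ?Y (EE ?Y f) = EE ?X (EE ?Y f) + smul c (EE ?Y f)"
  proof -
    have "EE ?Y (EE ?Y f) = EE ?Y (EE ?X f + smul c f)"
      by (simp only: hb)
    also have "\<dots> = EE ?Y (EE ?X f) + smul c (EE ?Y f)" by simp
    finally have "EE ?Y (EE ?Y f) = EE ?Y (EE ?X f) + smul c (EE ?Y f)" .
    then show ?thesis using EE_comm[OF disjXY[of p q], where g = f] by simp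
  qed
  have p1: "CasI ?X f \<alpha> = - K1 * f \<alpha>" using cx by simp
  have p2: "CasI ?Y f \<alpha> = - K2 * f \<alpha>" using cy by simp
  have q1: "CasI ?X f \<alpha> = RR ?X (LL ?X f) \<alpha> - EE ?X (EE ?X f) \<alpha> + (2 - of_nat p) * EE ?X f \<alpha>"
    using fun_cong[OF e1, of \<alpha>] by simp
  have q2: "CasI ?Y f \<alpha> = RR ?Y (LL ?Y f) \<alpha> - EE ?Y (EE ?Y f) \<alpha> + (2 - of_nat q) * EE ?Y f \<alpha>"
    using fun_cong[OF e2, of \<alpha>] by simp
  have q4: "RR ?Y (LL ?Y f) \<alpha> = - RR ?X (RR ?Y f) \<alpha>" using fun_cong[OF e4, of \<alpha>] by simp
  have q4': "RR ?X (LL ?X f) \<alpha> = - RR ?X (RR ?Y f) \<alpha>" using fun_cong[OF e4', of \<alpha>] by simp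
  have q6: "EE ?Y f \<alpha> = EE ?X f \<alpha> + c * f \<alpha>" using fun_cong[OF hb, of \<alpha>] by simp
  have q7: "EE ?X (EE ?Y f) \<alpha> = EE ?X (EE ?X f) \<alpha> + c * EE ?X f \<alpha>" using fun_cong[OF e7, of \<alpha>] by simp
  have q8: "EE ?Y (EE ?Y f) \<alpha> = EE ?X (EE ?Y f) \<alpha> + c * EE ?Y f \<alpha>" using fun_cong[OF e8, of \<alpha>] by simp
  show ?thesis
    using p1 p2 q1 q2 q4 q4' q6 q7 q8 c2 by algebra
qed

lemma Eul_x_EE: "Eul_x p f = EE {..<p} f" by (simp add: Eul_x_def EE_def)
lemma Eul_y_EE: "Eul_y p q f = EE {p..<p+q} f" by (simp add: Eul_y_def EE_def)
lemma Lap_x_LL: "Lap_x p f = LL {..<p} f" by (simp add: Lap_x_def LL_def)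
lemma Lap_y_LL: "Lap_y p q f = LL {p..<p+q} f" by (simp add: Lap_y_def LL_def)

lemma hop_hb:
  assumes "Hop p q f = smul d f"
  shows "EE {p..<p+q} f = EE {..<p} f + smul (d - complex_of_real ((real q - real p) / 2)) f"
proof
  fix \<alpha>
  have "- EE {..<p} f \<alpha> + EE {p..<p+q} f \<alpha> + complex_of_real ((real q - real p) / 2) * f \<alpha> = d * f \<alpha>"
    using fun_cong[OF assms, of \<alpha>] unfolding Hop_def Eul_x_EE Eul_y_EE by simp
  then show "EE {p..<p+q} f \<alpha> = (EE {..<p} f + smul (d - complex_of_real ((real q - real p) / 2)) f) \<alpha>"
    by (simp add: algebra_simps)
qed

lemma xplus_lx:
  assumes "good f" "Xplus p q f = 0"
  shows "LL {..<p} f = - RR {p..<p+q} f"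
proof
  fix \<alpha>
  have e: "Xplus p q f \<alpha> = (-1/2) * (LL {..<p} f \<alpha> + RR {p..<p+q} f \<alpha>)"
    unfolding Xplus_def Lap_x_LL ry2_RR ser_mult_RR[OF assms(1)] by (simp add: field_simps)
  have "(-1/2) * (LL {..<p} f \<alpha> + RR {p..<p+q} f \<alpha>) = 0"
    using e assms(2) by simp
  then have "LL {..<p} f \<alpha> + RR {p..<p+q} f \<alpha> = 0" by (simp only: mult_eq_0_iff) simp
  then show "LL {..<p} f \<alpha> = (- RR {p..<p+q} f) \<alpha>" by (simp add: eq_neg_iff_add_eq_0)
qed

lemma xminus_ly:
  assumes "good f" "Xminus p q f = 0"
  shows "LL {p..<p+q} f = - RR {..<p} f"
proof
  fix \<alpha>
  have e: "Xminus p q f \<alpha> = (1/2) * (RR {..<p} f \<alpha> + LL {p..<p+q} f \<alpha>)"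
    unfolding Xminus_def Lap_y_LL rx2_RR ser_mult_RR[OF assms(1)] by simp
  have "(1/2) * (RR {..<p} f \<alpha> + LL {p..<p+q} f \<alpha>) = 0"
    using e assms(2) by simp
  then have "RR {..<p} f \<alpha> + LL {p..<p+q} f \<alpha> = 0" by (simp only: mult_eq_0_iff) simp
  then show "LL {p..<p+q} f \<alpha> = (- RR {..<p} f) \<alpha>" by (simp add: eq_neg_iff_add_eq_0 add.commute)
qed

lemma nonzero_coeff:
  assumes "\<And>\<alpha>. (z::complex) * f \<alpha> = 0" "f \<noteq> 0"
  shows "z = 0"
proof -
  obtain \<alpha> where "f \<alpha> \<noteq> 0" using assms(2) by (metis ext zero_fun_apply)
  then show ?thesis using assms(1)[of \<alpha>] by simp
qed

theorem corollary3p5: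
  fixes p q m :: nat and kp km :: real and f :: ser
  assumes "2 \<le> p" and "2 \<le> q" and "even (p + q)"
    and "real m + 3 \<le> real (p + q) / 2"
    and "f \<in> Mplus p q m \<or> f \<in> Mminus p q m"
    and "K_homog p q kp km f"
  shows "let lam = (kp - km) * (kp + km - 2) - (real p - real q) / real (p + q) * real m * real (m + 2)
         in Xihat p q f = smul (complex_of_real lam) f \<and> (m = 0 \<and> f \<noteq> 0 \<longrightarrow> lam = 0)"
proof -
  obtain k l where kp: "real k + real p / 2 = kp" and km: "real l + real q / 2 = km" and g: "good f"
    and cx: "CasI {..<p} f = smul (- (of_nat k * (of_nat k + of_nat p - 2))) f"
    and cy: "CasI {p..<p+q} f = smul (- (of_nat l * (of_nat l + of_nat q - 2))) f"
    using Khom_facts[OF assms(6)] by blast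
  have pq: "p + q \<noteq> 0" using assms(1) by simp
  let ?s = "complex_of_real ((real q - real p) / 2)"
  have c2: "2 * (- ?s) = of_nat p - of_nat q" by (simp add: field_simps)
  define lam where "lam = (kp - km) * (kp + km - 2) - (real p - real q) / real (p + q) * real m * real (m + 2)"
  have A: "Xihat p q f = smul (complex_of_real lam) f"
    using assms(5)
  proof
    assume "f \<in> Mplus p q m"
    then have H: "Hop p q f = smul (of_nat m) f" and X: "Xplus p q f = 0" by (auto simp: Mplus_def)
    show ?thesis
      unfolding core_plus[OF cx cy hop_hb[OF H] xplus_lx[OF g X]]
      unfolding lam_def kp[symmetric] km[symmetric] lam_plus[OF pq] ..
  next
    assume "f \<in> Mminus p q m"
    then have H: "Hop p q f = smul (- of_nat m) f" and X: "Xminus p q f = 0" by (auto simp: Mminus_def)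
    show ?thesis
      unfolding core_minus[OF cx cy hop_hb[OF H] xminus_ly[OF g X]]
      unfolding lam_def kp[symmetric] km[symmetric] lam_minus[OF pq] ..
  qed
  have B: "m = 0 \<and> f \<noteq> 0 \<longrightarrow> lam = 0"
  proof
    assume m0: "m = 0 \<and> f \<noteq> 0"
    then have m: "m = 0" and fn: "f \<noteq> 0" by auto
    have hb: "EE {p..<p+q} f = EE {..<p} f + smul (- ?s) f"
      and lx: "LL {..<p} f = - RR {p..<p+q} f" and ly: "LL {p..<p+q} f = - RR {..<p} f"
    proof -
      from assms(5) have "EE {p..<p+q} f = EE {..<p} f + smul (- ?s) f \<and> LL {..<p} f = - RR {p..<p+q} f \<and> LL {p..<p+q} f = - RR {..<p} f"
      proof
        assume "f \<in> Mplus p q m"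
        then have H: "Hop p q f = smul 0 f" and X: "Xplus p q f = 0" and X2: "Xminus p q f = 0"
          using m by (auto simp: Mplus_def)
        show ?thesis using hop_hb[OF H] xplus_lx[OF g X] xminus_ly[OF g X2] by simp
      next
        assume "f \<in> Mminus p q m"
        then have H: "Hop p q f = smul 0 f" and X: "Xminus p q f = 0" and X2: "Xplus p q f = 0"
          using m by (auto simp: Mminus_def)
        show ?thesis using hop_hb[OF H] xplus_lx[OF g X2] xminus_ly[OF g X] by simp
      qed
      then show "EE {p..<p+q} f = EE {..<p} f + smul (- ?s) f" "LL {..<p} f = - RR {p..<p+q} f" "LL {p..<p+q} f = - RR {..<p} f"
        by auto
    qed
    have z: "of_nat k * (of_nat k + of_nat p - 2) - of_nat l * (of_nat l + of_nat q - 2) + (- ?s) * (- ?s) + (of_nat q - 2) * (- ?s) = 0"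
      by (rule nonzero_coeff[OF core_zero[OF cx cy hb lx ly c2] fn])
    have "complex_of_real lam = 0"
      unfolding lam_def kp[symmetric] km[symmetric] m lam_zero z ..
    then show "lam = 0" by simp
  qed
  show ?thesis unfolding Let_def lam_def[symmetric] using A B by blast
qed

end
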